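(* Let $(P,Q):[\tau_0,\infty)\times S^1\to\mathbb{R}^2$ be a smooth solution of \[ P_{\tau\tau}-e^{-2\tau}P_{\theta\theta}-e^{2P}(Q_\tau^2-e^{-2\tau}Q_\theta^2)=0,\qquad Q_{\tau\tau}-e^{-2\tau}Q_{\theta\theta}+2(P_\tau Q_\tau-e^{-2\tau}P_\theta Q_\theta)=0, \] with $\tau_0\ge2$, such that for some $\gamma>0$ and all $\theta\in S^1$, $1\le P(\tau_0,\theta)\le\tau_0-1$ and $\gamma\le P(\tau_0,\theta)/\tau_0\le1-\gamma$, and $F(\tau_0)\le(\gamma-\alpha)^2$ for some $0<\alpha<\gamma$. Then there is a constant $C$ such that for all $\tau\ge\tau_0$, \[ \big\|e^{2P}[Q_\tau^2(\tau,\cdot)+e^{-2\tau}Q_\theta^2(\tau,\cdot)]\big\|_{C^0(S^1,\mathbb{R})}\le Ce^{-\alpha\tau}. \]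
   Context: $S^1=\mathbb{R}/2\pi\mathbb{Z}$; $\|\cdot\|_{C^0}$ is the sup norm. The function $F$ is \[ F(\tau)=\tfrac12\sup_{\theta\in S^1}\Big[(P_\tau-\tfrac1\tau P+e^{-\tau}P_\theta)^2+e^{2P}(Q_\tau+e^{-\tau}Q_\theta)^2\Big] +\tfrac12\sup_{\theta\in S^1}\Big[(P_\tau-\tfrac1\tau P-e^{-\tau}P_\theta)^2+e^{2P}(Q_\tau-e^{-\tau}Q_\theta)^2\Big]. \] *)

theory Defs
  imports "HOL-Analysis.Analysis"
begin

text \<open>Smoothness (C-infinity) of a real function of two real variables on a set S,
  with derivatives taken within S (so one-sided derivatives at boundary points):
  there is a family D of functions containing f, each member of which is
  (Frechet) differentiable within S at every point of S with both partial
  derivatives again in D.\<close>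
definition smooth_on2 :: "(real \<times> real) set \<Rightarrow> (real \<times> real \<Rightarrow> real) \<Rightarrow> bool" where
  "smooth_on2 S f \<longleftrightarrow>
     (\<exists>D. f \<in> D \<and>
        (\<forall>g\<in>D. \<exists>g1\<in>D. \<exists>g2\<in>D. \<forall>p\<in>S.
            (g has_derivative (\<lambda>(h, k). g1 p * h + g2 p * k)) (at p within S)))"

definition dtau :: "real \<Rightarrow> (real \<Rightarrow> real \<Rightarrow> real) \<Rightarrow> real \<Rightarrow> real \<Rightarrow> real" where
  "dtau t0 u t x = vector_derivative (\<lambda>s. u s x) (at t within {t0..})"

definition dth :: "(real \<Rightarrow> real \<Rightarrow> real) \<Rightarrow> real \<Rightarrow> real \<Rightarrow> real" where
  "dth u t x = vector_derivative (\<lambda>y. u t y) (at x)"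

text \<open>The functional F(tau) from the paper; theta ranges over S^1, represented by
  2*pi-periodic functions on the reals.\<close>
definition Ffun :: "real \<Rightarrow> (real \<Rightarrow> real \<Rightarrow> real) \<Rightarrow> (real \<Rightarrow> real \<Rightarrow> real) \<Rightarrow> real \<Rightarrow> real" where
  "Ffun t0 P Q t =
     1/2 * (SUP x\<in>UNIV. (dtau t0 P t x - P t x / t + exp (-t) * dth P t x)\<^sup>2
                     + exp (2 * P t x) * (dtau t0 Q t x + exp (-t) * dth Q t x)\<^sup>2)
   + 1/2 * (SUP x\<in>UNIV. (dtau t0 P t x - P t x / t - exp (-t) * dth P t x)\<^sup>2
                     + exp (2 * P t x) * (dtau t0 Q t x - exp (-t) * dth Q t x)\<^sup>2)"

end

theory Submission
  imports Defs
begin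

lemma mvt_deriv:
  fixes f f' :: "real \<Rightarrow> real"
  assumes "a < b" "\<And>x. a \<le> x \<Longrightarrow> x \<le> b \<Longrightarrow> (f has_real_derivative f' x) (at x)"
  shows "\<exists>z. a < z \<and> z < b \<and> f b - f a = (b - a) * f' z"
proof -
  have "continuous_on {a..b} f"
    using assms(2) by (intro continuous_at_imp_continuous_on ballI DERIV_isCont) auto
  moreover have "f differentiable (at x)" if "a < x" "x < b" for x
    using assms(2)[of x] that unfolding real_differentiable_def by auto
  ultimately obtain l z where lz: "a < z" "z < b" "DERIV f z :> l" "f b - f a = (b - a) * l"
    using MVT[OF assms(1)] by blast
  have "DERIV f z :> f' z" using assms(2)[of z] lz by auto
  then have "l = f' z" using lz(3) DERIV_unique by metis
  then show ?thesis using lz by blast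
qed
lemma clairaut:
  fixes f f1 f2 f12 f21 :: "real \<times> real \<Rightarrow> real"
  assumes U: "open U" "(t, x) \<in> U"
    and d1: "\<And>s y. (s, y) \<in> U \<Longrightarrow> ((\<lambda>u. f (u, y)) has_real_derivative f1 (s, y)) (at s)"
    and d2: "\<And>s y. (s, y) \<in> U \<Longrightarrow> ((\<lambda>v. f1 (s, v)) has_real_derivative f12 (s, y)) (at y)"
    and d3: "\<And>s y. (s, y) \<in> U \<Longrightarrow> ((\<lambda>v. f (s, v)) has_real_derivative f2 (s, y)) (at y)"
    and d4: "\<And>s y. (s, y) \<in> U \<Longrightarrow> ((\<lambda>u. f2 (u, y)) has_real_derivative f21 (s, y)) (at s)"
    and c1: "continuous (at (t, x)) f12" and c2: "continuous (at (t, x)) f21"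
  shows "f12 (t, x) = f21 (t, x)"
proof (rule ccontr)
  assume ne: "f12 (t, x) \<noteq> f21 (t, x)"
  define \<epsilon> where "\<epsilon> = \<bar>f12 (t, x) - f21 (t, x)\<bar> / 2"
  have e: "\<epsilon> > 0" using ne by (simp add: \<epsilon>_def)
  obtain d0 where d0: "d0 > 0" "ball (t, x) d0 \<subseteq> U" using U open_contains_ball by blast
  obtain d1' where d1': "d1' > 0" "\<And>z. dist z (t, x) < d1' \<Longrightarrow> dist (f12 z) (f12 (t, x)) < \<epsilon>"
    using c1 e unfolding continuous_at_eps_delta by blast
  obtain d2' where d2': "d2' > 0" "\<And>z. dist z (t, x) < d2' \<Longrightarrow> dist (f21 z) (f21 (t, x)) < \<epsilon>"
    using c2 e unfolding continuous_at_eps_delta by blast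
  define d where "d = Min {d0, d1', d2'}"
  have d: "d > 0" "d \<le> d0" "d \<le> d1'" "d \<le> d2'" using d0 d1' d2' by (auto simp: d_def)
  define h where "h = d / 2"
  have h: "h > 0" using d by (simp add: h_def)
  have inb: "dist (s, y) (t, x) < d" if "t \<le> s" "s \<le> t + h" "x \<le> y" "y \<le> x + h" for s y
  proof -
    have "dist (s, y) (t, x) = sqrt ((s - t)\<^sup>2 + (y - x)\<^sup>2)"
      by (simp add: dist_Pair_Pair dist_real_def)
    also have "\<dots> \<le> sqrt (h\<^sup>2 + h\<^sup>2)"
      using that by (intro real_sqrt_le_mono add_mono power_mono) auto
    also have "\<dots> < sqrt (d\<^sup>2)"
      using h d by (intro real_sqrt_less_mono) (simp add: h_def power2_eq_square field_simps)
    finally show ?thesis using d by simp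
  qed
  have inU: "(s, y) \<in> U" if "t \<le> s" "s \<le> t + h" "x \<le> y" "y \<le> x + h" for s y
    using inb[OF that] d d0 by (auto simp: dist_commute subset_iff)
  define \<Delta> where "\<Delta> = f (t + h, x + h) - f (t + h, x) - f (t, x + h) + f (t, x)"
  have "\<exists>z. t < z \<and> z < t + h \<and>
    (\<lambda>s. f (s, x + h) - f (s, x)) (t + h) - (\<lambda>s. f (s, x + h) - f (s, x)) t
      = (t + h - t) * (f1 (z, x + h) - f1 (z, x))"
  proof (rule mvt_deriv)
    fix s assume "t \<le> s" "s \<le> t + h"
    then show "((\<lambda>s. f (s, x + h) - f (s, x)) has_real_derivative f1 (s, x + h) - f1 (s, x)) (at s)"
      using h by (intro DERIV_diff d1 inU) auto
  qed (use h in simp)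
  then obtain \<xi> where \<xi>: "t < \<xi>" "\<xi> < t + h"
    "(\<lambda>s. f (s, x + h) - f (s, x)) (t + h) - (\<lambda>s. f (s, x + h) - f (s, x)) t
      = (t + h - t) * (f1 (\<xi>, x + h) - f1 (\<xi>, x))" by blast
  obtain \<eta> where \<eta>: "x < \<eta>" "\<eta> < x + h" "f1 (\<xi>, x + h) - f1 (\<xi>, x) = (x + h - x) * f12 (\<xi>, \<eta>)"
  proof -
    have "\<exists>z. x < z \<and> z < x + h \<and> f1 (\<xi>, x + h) - f1 (\<xi>, x) = (x + h - x) * f12 (\<xi>, z)"
      by (rule mvt_deriv) (use h \<xi> in \<open>auto intro!: d2 inU\<close>)
    then show ?thesis using that by blast
  qed
  have "\<exists>z. x < z \<and> z < x + h \<and>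
    (\<lambda>v. f (t + h, v) - f (t, v)) (x + h) - (\<lambda>v. f (t + h, v) - f (t, v)) x
      = (x + h - x) * (f2 (t + h, z) - f2 (t, z))"
  proof (rule mvt_deriv)
    fix v assume "x \<le> v" "v \<le> x + h"
    then show "((\<lambda>v. f (t + h, v) - f (t, v)) has_real_derivative f2 (t + h, v) - f2 (t, v)) (at v)"
      using h by (intro DERIV_diff d3 inU) auto
  qed (use h in simp)
  then obtain \<eta>' where \<eta>': "x < \<eta>'" "\<eta>' < x + h"
    "(\<lambda>v. f (t + h, v) - f (t, v)) (x + h) - (\<lambda>v. f (t + h, v) - f (t, v)) x
      = (x + h - x) * (f2 (t + h, \<eta>') - f2 (t, \<eta>'))" by blast
  obtain \<xi>' where \<xi>': "t < \<xi>'" "\<xi>' < t + h" "f2 (t + h, \<eta>') - f2 (t, \<eta>') = (t + h - t) * f21 (\<xi>', \<eta>')"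
  proof -
    have "\<exists>z. t < z \<and> z < t + h \<and> f2 (t + h, \<eta>') - f2 (t, \<eta>') = (t + h - t) * f21 (z, \<eta>')"
      by (rule mvt_deriv) (use h \<eta>' in \<open>auto intro!: d4 inU\<close>)
    then show ?thesis using that by blast
  qed
  have "\<Delta> = h * (h * f12 (\<xi>, \<eta>))" using \<xi> \<eta> by (simp add: \<Delta>_def algebra_simps)
  moreover have "\<Delta> = h * (h * f21 (\<xi>', \<eta>'))" using \<xi>' \<eta>' by (simp add: \<Delta>_def algebra_simps)
  ultimately have eq: "f12 (\<xi>, \<eta>) = f21 (\<xi>', \<eta>')" using h by simp
  have "dist (f12 (\<xi>, \<eta>)) (f12 (t, x)) < \<epsilon>"
    using d1'(2)[of "(\<xi>, \<eta>)"] inb[of \<xi> \<eta>] \<xi> \<eta> d by auto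
  moreover have "dist (f21 (\<xi>', \<eta>')) (f21 (t, x)) < \<epsilon>"
    using d2'(2)[of "(\<xi>', \<eta>')"] inb[of \<xi>' \<eta>'] \<xi>' \<eta>' d by auto
  ultimately show False using eq unfolding dist_real_def \<epsilon>_def by argo
qed


lemma curve_deriv:
  fixes f :: "real \<times> real \<Rightarrow> real"
  assumes "(f has_derivative (\<lambda>(h, k). a * h + b * k)) (at (t, x + e * exp (- t)))"
  shows "((\<lambda>s. f (s, x + e * exp (- s))) has_real_derivative (a - e * exp (- t) * b)) (at t)"
proof -
  have c: "((\<lambda>s. (s, x + e * exp (- s))) has_derivative (\<lambda>h. (h, h * (- (e * exp (- t)))))) (at t)"
  proof (rule has_derivative_Pair)
    show "((\<lambda>s. s) has_derivative (\<lambda>h. h)) (at t)" by (rule has_derivative_ident)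
    have "((\<lambda>s. x + e * exp (- s)) has_real_derivative (- (e * exp (- t)))) (at t)"
      by (auto intro!: derivative_eq_intros)
    then show "((\<lambda>s. x + e * exp (- s)) has_derivative (\<lambda>h. h * (- (e * exp (- t))))) (at t)"
      unfolding has_field_derivative_def by (rule has_derivative_eq_rhs) (auto simp: fun_eq_iff)
  qed
  have "((\<lambda>s. f (s, x + e * exp (- s))) has_derivative
      (\<lambda>h. (\<lambda>(h, k). a * h + b * k) (h, h * (- (e * exp (- t)))))) (at t)"
    using has_derivative_compose[OF c assms] by simp
  then show ?thesis
    unfolding has_field_derivative_def
    by (rule has_derivative_eq_rhs) (auto simp: fun_eq_iff algebra_simps)
qed

lemma partial_within:
  fixes f :: "real \<times> real \<Rightarrow> real" and c :: "real \<Rightarrow> real \<times> real"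
  assumes "\<And>z. z \<in> S \<Longrightarrow> (f has_derivative (\<lambda>(h, k). f1 z * h + f2 z * k)) (at z within S)"
    and "c ` T \<subseteq> S" "u \<in> T" "(c has_derivative (\<lambda>h. (h * c1, h * c2))) (at u within T)"
  shows "((\<lambda>v. f (c v)) has_real_derivative (f1 (c u) * c1 + f2 (c u) * c2)) (at u within T)"
proof -
  have "((\<lambda>v. f (c v)) has_derivative (\<lambda>h. (\<lambda>(h, k). f1 (c u) * h + f2 (c u) * k) (h * c1, h * c2))) (at u within T)"
    by (rule has_derivative_in_compose2[where g' = "\<lambda>z. (\<lambda>(h, k). f1 z * h + f2 z * k)"]) (use assms in auto)
  then show ?thesis
    unfolding has_field_derivative_def
    by (rule has_derivative_eq_rhs) (auto simp: fun_eq_iff algebra_simps)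
qed

lemma per_int:
  fixes f :: "real \<Rightarrow> 'a"
  assumes "\<And>x. f (x + 2 * pi) = f x"
  shows "f (y + 2 * pi * real_of_int n) = f y"
proof (induction n rule: int_induct[where k = 0])
  case base then show ?case by simp
next
  case (step1 i)
  have "f (y + 2 * pi * real_of_int (i + 1)) = f ((y + 2 * pi * real_of_int i) + 2 * pi)"
    by (simp add: algebra_simps)
  also have "\<dots> = f y" using assms step1 by simp
  finally show ?case .
next
  case (step2 i)
  have "f (y + 2 * pi * real_of_int i) = f ((y + 2 * pi * real_of_int (i - 1)) + 2 * pi)"
    by (simp add: algebra_simps)
  also have "\<dots> = f (y + 2 * pi * real_of_int (i - 1))" using assms by simp
  finally show ?case using step2 by simp
qed

lemma per_red:
  fixes f :: "real \<Rightarrow> 'a"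
  assumes "\<And>x. f (x + 2 * pi) = f x"
  shows "\<exists>y\<in>{0..2*pi}. f x = f y"
proof -
  define n where "n = \<lfloor>x / (2 * pi)\<rfloor>"
  define y where "y = x - 2 * pi * real_of_int n"
  have "real_of_int n \<le> x / (2 * pi)" "x / (2 * pi) < real_of_int n + 1"
    unfolding n_def by linarith+
  then have "2 * pi * real_of_int n \<le> x" "x < 2 * pi * real_of_int n + 2 * pi"
    using pi_gt_zero by (simp_all add: field_simps)
  then have "y \<in> {0..2*pi}" unfolding y_def by auto
  moreover have "f x = f y"
    using per_int[of f, OF assms, of y n] unfolding y_def by simp
  ultimately show ?thesis by blast
qed

lemma bdd_per:
  fixes g :: "real \<times> real \<Rightarrow> real"
  assumes "continuous_on ({a..b} \<times> UNIV) g" "a \<le> b"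
    and "\<And>t x. t \<in> {a..b} \<Longrightarrow> g (t, x + 2 * pi) = g (t, x)"
  shows "\<exists>M. \<forall>t\<in>{a..b}. \<forall>x. g (t, x) \<le> M"
proof -
  have "compact ({a..b} \<times> {0..2*pi})" by (intro compact_Times compact_Icc)
  moreover have "{a..b} \<times> {0..2*pi} \<noteq> {}" using assms(2) by auto
  moreover have "continuous_on ({a..b} \<times> {0..2*pi}) g"
    by (rule continuous_on_subset[OF assms(1)]) auto
  ultimately obtain z where z: "z \<in> {a..b} \<times> {0..2*pi}" "\<And>y. y \<in> {a..b} \<times> {0..2*pi} \<Longrightarrow> g y \<le> g z"
    using continuous_attains_sup[of "{a..b} \<times> {0..2*pi}" g] by blast
  have "g (t, x) \<le> g z" if tt: "t \<in> {a..b}" for t x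
  proof -
    obtain y where "y \<in> {0..2*pi}" "g (t, x) = g (t, y)"
      using per_red[of "\<lambda>x. g (t, x)" x] assms(3)[OF tt] by blast
    then show ?thesis using z(2)[of "(t, y)"] tt by auto
  qed
  then show ?thesis by blast
qed

lemma first_violation:
  fixes g :: "real \<times> real \<Rightarrow> real"
  assumes cont: "continuous_on ({a..} \<times> UNIV) g"
    and per: "\<And>t x. a \<le> t \<Longrightarrow> g (t, x + 2 * pi) = g (t, x)"
    and t1: "a \<le> t1" "g (t1, x1) \<ge> 0"
  shows "\<exists>T x. a \<le> T \<and> T \<le> t1 \<and> g (T, x) \<ge> 0 \<and> (\<forall>s y. a \<le> s \<longrightarrow> s < T \<longrightarrow> g (s, y) < 0)"
proof -
  define R where "R = {a..t1} \<times> {0..2*pi}"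
  define K where "K = R \<inter> g -` {0..}"
  have "closed K" unfolding K_def R_def
    by (rule continuous_closed_preimage)
      (auto intro: continuous_on_subset[OF cont] closed_Times)
  moreover have "compact R" unfolding R_def by (intro compact_Times compact_Icc)
  ultimately have "compact (K \<inter> R)" by (rule closed_Int_compact)
  moreover have "K \<inter> R = K" by (auto simp: K_def)
  ultimately have cK: "compact K" by simp
  obtain y1 where y1: "y1 \<in> {0..2*pi}" "g (t1, x1) = g (t1, y1)"
    using per_red[of "\<lambda>x. g (t1, x)" x1] per t1 by blast
  have "(t1, y1) \<in> K" using y1 t1 by (auto simp: K_def R_def)
  then have "K \<noteq> {}" by blast
  then obtain z where z: "z \<in> K" "\<And>y. y \<in> K \<Longrightarrow> fst z \<le> fst y"
    using continuous_attains_inf[OF cK _ continuous_on_fst[OF continuous_on_id]] by blast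
  obtain T x where zz: "z = (T, x)" by (cases z)
  have "a \<le> T" "T \<le> t1" "g (T, x) \<ge> 0" using z(1) zz by (auto simp: K_def R_def)
  moreover have "g (s, y) < 0" if "a \<le> s" "s < T" for s y
  proof (rule ccontr)
    assume "\<not> g (s, y) < 0"
    have ss: "a \<le> s" using that by simp
    obtain y' where y': "y' \<in> {0..2*pi}" "g (s, y) = g (s, y')"
      using per_red[of "\<lambda>x. g (s, x)" y] per[OF ss] by blast
    have "(s, y') \<in> K" using y' that \<open>T \<le> t1\<close> \<open>\<not> g (s, y) < 0\<close> by (auto simp: K_def R_def)
    then have "T \<le> s" using z(2) zz by force
    then show False using that by simp
  qed
  ultimately show ?thesis by blast
qed

lemma cont_left_le:
  fixes f :: "real \<Rightarrow> real"
  assumes "continuous_on {a..T} f" "a < T" "\<And>s. a \<le> s \<Longrightarrow> s < T \<Longrightarrow> f s < 0"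
  shows "f T \<le> 0"
proof (rule ccontr)
  assume "\<not> f T \<le> 0"
  then have pos: "f T > 0" by simp
  have "T \<in> {a..T}" using assms(2) by simp
  then obtain d where d: "d > 0" "\<And>s. s \<in> {a..T} \<Longrightarrow> dist s T < d \<Longrightarrow> dist (f s) (f T) < f T"
    using assms(1) pos unfolding continuous_on_iff by blast
  define s where "s = max a (T - d / 2)"
  have "s \<in> {a..T}" "dist s T < d" using d assms(2) by (auto simp: s_def dist_real_def)
  then have "dist (f s) (f T) < f T" by (rule d(2))
  moreover have "f s < 0" using assms(3)[of s] d assms(2) by (auto simp: s_def)
  ultimately show False by (simp add: dist_real_def)
qed


lemma barrier:
  fixes f :: "real \<Rightarrow> real \<times> real \<Rightarrow> real" and W :: "real \<Rightarrow> real \<Rightarrow> real"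
  assumes cont: "\<And>e. e = 1 \<or> e = -1 \<Longrightarrow> continuous_on ({a..} \<times> UNIV) (f e)"
    and contW: "\<And>e. e = 1 \<or> e = -1 \<Longrightarrow> continuous_on {a..} (W e)"
    and per: "\<And>e t x. e = 1 \<or> e = -1 \<Longrightarrow> a \<le> t \<Longrightarrow> f e (t, x + 2 * pi) = f e (t, x)"
    and init: "\<And>e y. e = 1 \<or> e = -1 \<Longrightarrow> f e (a, y) < W e a"
    and step: "\<And>T e x0. a < T \<Longrightarrow> e = 1 \<or> e = -1 \<Longrightarrow>
        (\<And>s y e'. a \<le> s \<Longrightarrow> s \<le> T \<Longrightarrow> e' = 1 \<or> e' = -1 \<Longrightarrow> f e' (s, y) \<le> W e' s) \<Longrightarrow>
        f e (T, x0 + e * exp (- T)) = W e T \<Longrightarrow>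
        \<exists>D<0. ((\<lambda>s. f e (s, x0 + e * exp (- s)) - W e s) has_real_derivative D) (at T)"
    and t: "a \<le> t" and e: "e = 1 \<or> e = -1"
  shows "f e (t, y) < W e t"
proof (rule ccontr)
  assume viol: "\<not> f e (t, y) < W e t"
  define g where "g z = max (f 1 z - W 1 (fst z)) (f (-1) z - W (-1) (fst z))" for z
  have cW: "continuous_on ({a..} \<times> UNIV) (\<lambda>z. W e (fst z))" if "e = 1 \<or> e = -1" for e
    by (rule continuous_on_compose2[OF contW[OF that]]) (auto intro: continuous_intros)
  have cg: "continuous_on ({a..} \<times> UNIV) g" unfolding g_def
    by (intro continuous_intros cont cW) auto
  have pg: "g (t, x + 2 * pi) = g (t, x)" if "a \<le> t" for t x
    using per[OF _ that] by (simp add: g_def)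
  have "g (t, y) \<ge> 0" using viol e by (auto simp: g_def)
  then obtain T xs where T: "a \<le> T" "T \<le> t" "g (T, xs) \<ge> 0" "\<And>s y. a \<le> s \<Longrightarrow> s < T \<Longrightarrow> g (s, y) < 0"
    using first_violation[OF cg pg t] by blast
  have "g (a, xs) < 0" using init[of 1 xs] init[of "-1" xs] by (simp add: g_def)
  then have aT: "a < T" using T(1,3) by (cases "a = T") auto
  have strict: "f e' (s, y') < W e' s" if "a \<le> s" "s < T" "e' = 1 \<or> e' = -1" for s y' e'
    using T(4)[OF that(1,2), of y'] that(3) by (auto simp: g_def)
  have le: "f e' (s, y') \<le> W e' s" if "a \<le> s" "s \<le> T" "e' = 1 \<or> e' = -1" for s y' e'
  proof (cases "s < T")
    case True show ?thesis by (rule less_imp_le[OF strict[OF that(1) True that(3)]])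
  next
    case False
    then have sT: "s = T" using that by simp
    have "continuous_on {a..T} (\<lambda>u. f e' (u, y') - W e' u)"
    proof (intro continuous_intros)
      show "continuous_on {a..T} (\<lambda>u. f e' (u, y'))"
        by (rule continuous_on_compose2[OF cont[OF that(3)]]) (auto intro: continuous_intros)
      show "continuous_on {a..T} (W e')"
        by (rule continuous_on_subset[OF contW[OF that(3)]]) auto
    qed
    then have "(\<lambda>u. f e' (u, y') - W e' u) T \<le> 0"
      by (rule cont_left_le) (use aT strict[OF _ _ that(3)] in auto)
    then show ?thesis using sT by simp
  qed
  have "f 1 (T, xs) \<ge> W 1 T \<or> f (-1) (T, xs) \<ge> W (-1) T"
    using T(3) by (simp add: g_def max_def split: if_splits)
  then obtain e0 where e0: "e0 = 1 \<or> e0 = -1" "f e0 (T, xs) \<ge> W e0 T"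
    by blast
  define x0 where "x0 = xs - e0 * exp (- T)"
  have xs: "x0 + e0 * exp (- T) = xs" by (simp add: x0_def)
  have eq: "f e0 (T, x0 + e0 * exp (- T)) = W e0 T"
    using e0 le[OF T(1) order_refl e0(1), of xs] xs by simp
  obtain D where D: "D < 0" "((\<lambda>s. f e0 (s, x0 + e0 * exp (- s)) - W e0 s) has_real_derivative D) (at T)"
    using step[OF aT e0(1) le eq] by blast
  obtain d where d: "d > 0" "\<And>h. h > 0 \<Longrightarrow> h < d \<Longrightarrow>
      (\<lambda>s. f e0 (s, x0 + e0 * exp (- s)) - W e0 s) T < (\<lambda>s. f e0 (s, x0 + e0 * exp (- s)) - W e0 s) (T - h)"
    using DERIV_neg_dec_left[OF D(2) D(1)] by blast
  define h where "h = min (d / 2) ((T - a) / 2)"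
  have h: "h > 0" "h < d" using d aT by (auto simp: h_def)
  have "0 < f e0 (T - h, x0 + e0 * exp (- (T - h))) - W e0 (T - h)"
    using d(2)[OF h] eq by simp
  moreover
  have hle: "h \<le> (T - a) / 2" unfolding h_def by (rule min.cobounded2)
  have "h \<le> T - a" using hle aT by simp
  then have "a \<le> T - h" by simp
  moreover have "T - h < T" using h by linarith
  ultimately have "0 < f e0 (T - h, x0 + e0 * exp (- (T - h))) - W e0 (T - h)"
    "f e0 (T - h, x0 + e0 * exp (- (T - h))) < W e0 (T - h)"
    using strict[OF _ _ e0(1)] by blast+
  then show False by simp
qed

locale wm =
  fixes t0 \<gamma> \<alpha> :: real
    and p q p1 p2 p11 p12 p22 q1 q2 q11 q12 q22 :: "real \<times> real \<Rightarrow> real"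
  assumes t0: "2 \<le> t0" and gamma: "0 < \<gamma>" and alpha: "0 < \<alpha>" "\<alpha> < \<gamma>"
    and dp: "\<And>z. z \<in> {t0..} \<times> UNIV \<Longrightarrow> (p has_derivative (\<lambda>(h, k). p1 z * h + p2 z * k)) (at z within {t0..} \<times> UNIV)"
    and dq: "\<And>z. z \<in> {t0..} \<times> UNIV \<Longrightarrow> (q has_derivative (\<lambda>(h, k). q1 z * h + q2 z * k)) (at z within {t0..} \<times> UNIV)"
    and dp1: "\<And>z. z \<in> {t0<..} \<times> UNIV \<Longrightarrow> (p1 has_derivative (\<lambda>(h, k). p11 z * h + p12 z * k)) (at z)"
    and dp2: "\<And>z. z \<in> {t0<..} \<times> UNIV \<Longrightarrow> (p2 has_derivative (\<lambda>(h, k). p12 z * h + p22 z * k)) (at z)"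
    and dq1: "\<And>z. z \<in> {t0<..} \<times> UNIV \<Longrightarrow> (q1 has_derivative (\<lambda>(h, k). q11 z * h + q12 z * k)) (at z)"
    and dq2: "\<And>z. z \<in> {t0<..} \<times> UNIV \<Longrightarrow> (q2 has_derivative (\<lambda>(h, k). q12 z * h + q22 z * k)) (at z)"
    and cp1: "continuous_on ({t0..} \<times> UNIV) p1" and cp2: "continuous_on ({t0..} \<times> UNIV) p2"
    and cq1: "continuous_on ({t0..} \<times> UNIV) q1" and cq2: "continuous_on ({t0..} \<times> UNIV) q2"
    and eqp: "\<And>z. z \<in> {t0<..} \<times> UNIV \<Longrightarrow>
       p11 z - exp (-2 * fst z) * p22 z - exp (2 * p z) * ((q1 z)\<^sup>2 - exp (-2 * fst z) * (q2 z)\<^sup>2) = 0"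
    and eqq: "\<And>z. z \<in> {t0<..} \<times> UNIV \<Longrightarrow>
       q11 z - exp (-2 * fst z) * q22 z + 2 * (p1 z * q1 z - exp (-2 * fst z) * p2 z * q2 z) = 0"
    and per: "\<And>t x. t \<ge> t0 \<Longrightarrow> p (t, x + 2 * pi) = p (t, x) \<and> p1 (t, x + 2 * pi) = p1 (t, x)
        \<and> p2 (t, x + 2 * pi) = p2 (t, x) \<and> q1 (t, x + 2 * pi) = q1 (t, x) \<and> q2 (t, x + 2 * pi) = q2 (t, x)"
    and init1: "\<And>x. 1 \<le> p (t0, x) \<and> p (t0, x) \<le> t0 - 1"
    and init2: "\<And>x. \<gamma> \<le> p (t0, x) / t0 \<and> p (t0, x) / t0 \<le> 1 - \<gamma>"
    and Fb: "1/2 * (SUP x. (p1 (t0, x) - p (t0, x) / t0 + exp (- t0) * p2 (t0, x))\<^sup>2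
                  + exp (2 * p (t0, x)) * (q1 (t0, x) + exp (- t0) * q2 (t0, x))\<^sup>2)
           + 1/2 * (SUP x. (p1 (t0, x) - p (t0, x) / t0 - exp (- t0) * p2 (t0, x))\<^sup>2
                  + exp (2 * p (t0, x)) * (q1 (t0, x) - exp (- t0) * q2 (t0, x))\<^sup>2) \<le> (\<gamma> - \<alpha>)\<^sup>2"
begin

definition "A e z = p1 z + e * exp (- fst z) * p2 z"
definition "C e z = A e z - p z / fst z"
definition "B e z = exp (p z) * (q1 z + e * exp (- fst z) * q2 z)"
definition "E e z = (C e z)\<^sup>2 + (B e z)\<^sup>2"

lemma cp: "continuous_on ({t0..} \<times> UNIV) p"
  using dp has_derivative_continuous continuous_at_imp_continuous_within
  by (meson continuous_on_eq_continuous_within)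

lemma cE: "continuous_on ({t0..} \<times> UNIV) (E e)" and cB: "continuous_on ({t0..} \<times> UNIV) (\<lambda>z. (B e z)\<^sup>2)"
  and cA: "continuous_on ({t0..} \<times> UNIV) (A e)"
proof -
  have nz: "\<forall>z\<in>{t0..} \<times> UNIV. fst z \<noteq> 0" using t0 by auto
  show "continuous_on ({t0..} \<times> UNIV) (E e)" unfolding E_def C_def A_def B_def
    by (intro continuous_intros cp cp1 cp2 cq1 cq2 nz)
  show "continuous_on ({t0..} \<times> UNIV) (\<lambda>z. (B e z)\<^sup>2)" unfolding B_def
    by (intro continuous_intros cp cp1 cp2 cq1 cq2 nz)
  show "continuous_on ({t0..} \<times> UNIV) (A e)" unfolding A_def
    by (intro continuous_intros cp cp1 cp2 cq1 cq2 nz)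
qed

lemma perE: "t \<ge> t0 \<Longrightarrow> E e (t, x + 2 * pi) = E e (t, x)"
  and perB: "t \<ge> t0 \<Longrightarrow> B e (t, x + 2 * pi) = B e (t, x)"
  using per[of t x] by (simp_all add: E_def C_def A_def B_def)

lemma interior_pt: "t0 < t \<Longrightarrow> at (t, x::real) within {t0..} \<times> UNIV = at (t, x)"
proof -
  assume "t0 < t"
  then have "(t, x) \<in> interior ({t0..} \<times> (UNIV::real set))"
    by (intro interiorI[of "{t0<..} \<times> UNIV"]) (auto intro: open_Times)
  then show ?thesis by (rule at_within_interior)
qed

lemma dp_at: "t0 < fst z \<Longrightarrow> (p has_derivative (\<lambda>(h, k). p1 z * h + p2 z * k)) (at z)"
  using dp[of z] interior_pt[of "fst z" "snd z"] by (cases z) auto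
lemma dq_at: "t0 < fst z \<Longrightarrow> (q has_derivative (\<lambda>(h, k). q1 z * h + q2 z * k)) (at z)"
  using dq[of z] interior_pt[of "fst z" "snd z"] by (cases z) auto


lemma curve_facts:
  fixes x e t :: real
  assumes "t0 < t"
  defines "z \<equiv> (t, x + e * exp (- t))"
  shows Dp: "((\<lambda>s. p (s, x + e * exp (- s))) has_real_derivative (p1 z - e * exp (- t) * p2 z)) (at t)"
    and Dq: "((\<lambda>s. q (s, x + e * exp (- s))) has_real_derivative (q1 z - e * exp (- t) * q2 z)) (at t)"
    and Dp1: "((\<lambda>s. p1 (s, x + e * exp (- s))) has_real_derivative (p11 z - e * exp (- t) * p12 z)) (at t)"
    and Dp2: "((\<lambda>s. p2 (s, x + e * exp (- s))) has_real_derivative (p12 z - e * exp (- t) * p22 z)) (at t)"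
    and Dq1: "((\<lambda>s. q1 (s, x + e * exp (- s))) has_real_derivative (q11 z - e * exp (- t) * q12 z)) (at t)"
    and Dq2: "((\<lambda>s. q2 (s, x + e * exp (- s))) has_real_derivative (q12 z - e * exp (- t) * q22 z)) (at t)"
proof -
  have zI: "z \<in> {t0<..} \<times> UNIV" using assms by (simp add: z_def)
  show "((\<lambda>s. p (s, x + e * exp (- s))) has_real_derivative (p1 z - e * exp (- t) * p2 z)) (at t)"
    unfolding z_def by (rule curve_deriv) (use dp_at[of z] zI in \<open>simp add: z_def\<close>)
  show "((\<lambda>s. q (s, x + e * exp (- s))) has_real_derivative (q1 z - e * exp (- t) * q2 z)) (at t)"
    unfolding z_def by (rule curve_deriv) (use dq_at[of z] zI in \<open>simp add: z_def\<close>)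
  show "((\<lambda>s. p1 (s, x + e * exp (- s))) has_real_derivative (p11 z - e * exp (- t) * p12 z)) (at t)"
    unfolding z_def by (rule curve_deriv) (use dp1[OF zI] in \<open>simp add: z_def\<close>)
  show "((\<lambda>s. p2 (s, x + e * exp (- s))) has_real_derivative (p12 z - e * exp (- t) * p22 z)) (at t)"
    unfolding z_def by (rule curve_deriv) (use dp2[OF zI] in \<open>simp add: z_def\<close>)
  show "((\<lambda>s. q1 (s, x + e * exp (- s))) has_real_derivative (q11 z - e * exp (- t) * q12 z)) (at t)"
    unfolding z_def by (rule curve_deriv) (use dq1[OF zI] in \<open>simp add: z_def\<close>)
  show "((\<lambda>s. q2 (s, x + e * exp (- s))) has_real_derivative (q12 z - e * exp (- t) * q22 z)) (at t)"
    unfolding z_def by (rule curve_deriv) (use dq2[OF zI] in \<open>simp add: z_def\<close>)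
qed

lemma DC:
  fixes x e t :: real
  assumes "t0 < t"
  defines "z \<equiv> (t, x + e * exp (- t))"
  shows "((\<lambda>s. C e (s, x + e * exp (- s))) has_real_derivative
     ((p11 z - e * exp (- t) * p12 z) + (e * (- exp (- t)) * p2 z + e * exp (- t) * (p12 z - e * exp (- t) * p22 z))
      - ((p1 z - e * exp (- t) * p2 z) * t - p z) / (t * t))) (at t)"
  unfolding C_def A_def fst_conv z_def
  using assms t0
  by (auto intro!: derivative_eq_intros Dp Dp1 Dp2 simp: z_def)

lemma exp2: fixes y :: real shows "exp (2 * y) = exp y * exp y" "exp (-2 * y) = exp (- y) * exp (- y)"
  by (simp_all add: exp_add[symmetric])

lemma DC2:
  fixes x e t :: real
  assumes "t0 < t" "e = 1 \<or> e = -1"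
  defines "z \<equiv> (t, x + e * exp (- t))"
  shows "((\<lambda>s. C e (s, x + e * exp (- s))) has_real_derivative
     (B 1 z * B (-1) z - (C e z - C (-e) z) / 2 - C (-e) z / t)) (at t)"
proof -
  have zI: "z \<in> {t0<..} \<times> UNIV" using assms by (simp add: z_def)
  have ft: "fst z = t" by (simp add: z_def)
  have tnz: "t \<noteq> 0" using assms t0 by simp
  have e11: "p11 z = exp (- t) * exp (- t) * p22 z + exp (p z) * exp (p z) * ((q1 z)\<^sup>2 - exp (- t) * exp (- t) * (q2 z)\<^sup>2)"
    using eqp[OF zI] unfolding ft exp2 by (simp add: algebra_simps)
  have "(p11 z - e * exp (- t) * p12 z) + (e * (- exp (- t)) * p2 z + e * exp (- t) * (p12 z - e * exp (- t) * p22 z))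
      - ((p1 z - e * exp (- t) * p2 z) * t - p z) / (t * t)
      = B 1 z * B (-1) z - (C e z - C (-e) z) / 2 - C (-e) z / t"
    using assms(2) tnz unfolding e11 C_def A_def B_def ft
    by (auto simp: field_simps power2_eq_square)
  then show ?thesis using DC[OF assms(1), where x=x and e=e] unfolding z_def by simp
qed


lemma DB:
  fixes x e t :: real
  assumes "t0 < t"
  defines "z \<equiv> (t, x + e * exp (- t))"
  shows "((\<lambda>s. B e (s, x + e * exp (- s))) has_real_derivative
     exp (p z) * (p1 z - e * exp (- t) * p2 z) * (q1 z + e * exp (- t) * q2 z)
     + exp (p z) * ((q11 z - e * exp (- t) * q12 z) + (e * (- exp (- t)) * q2 z + e * exp (- t) * (q12 z - e * exp (- t) * q22 z)))) (at t)"
  unfolding B_def fst_conv z_def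
  using assms t0
  by (auto intro!: derivative_eq_intros Dp Dq1 Dq2 simp: z_def)

lemma DB2:
  fixes x e t :: real
  assumes "t0 < t" "e = 1 \<or> e = -1"
  defines "z \<equiv> (t, x + e * exp (- t))"
  shows "((\<lambda>s. B e (s, x + e * exp (- s))) has_real_derivative
     (- A e z * B (-e) z - (B e z - B (-e) z) / 2)) (at t)"
proof -
  have zI: "z \<in> {t0<..} \<times> UNIV" using assms by (simp add: z_def)
  have ft: "fst z = t" by (simp add: z_def)
  have e11: "q11 z = exp (- t) * exp (- t) * q22 z - 2 * (p1 z * q1 z - exp (- t) * exp (- t) * p2 z * q2 z)"
    using eqq[OF zI] unfolding ft exp2 by (simp add: algebra_simps)
  have "exp (p z) * (p1 z - e * exp (- t) * p2 z) * (q1 z + e * exp (- t) * q2 z)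
     + exp (p z) * ((q11 z - e * exp (- t) * q12 z) + (e * (- exp (- t)) * q2 z + e * exp (- t) * (q12 z - e * exp (- t) * q22 z)))
      = - A e z * B (-e) z - (B e z - B (-e) z) / 2"
    using assms(2) unfolding e11 A_def B_def ft
    by (auto simp: field_simps power2_eq_square)
  then show ?thesis using DB[OF assms(1), where x=x and e=e] unfolding z_def by simp
qed

lemma DE:
  fixes x e t :: real
  assumes "t0 < t" "e = 1 \<or> e = -1"
  defines "z \<equiv> (t, x + e * exp (- t))"
  shows "((\<lambda>s. E e (s, x + e * exp (- s))) has_real_derivative
     (- E e z + (1 - 2 / t) * C e z * C (-e) z + (1 - 2 * p z / t) * B e z * B (-e) z)) (at t)"
proof -
  have "((\<lambda>s. E e (s, x + e * exp (- s))) has_real_derivative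
     (2 * C e z * (B 1 z * B (-1) z - (C e z - C (-e) z) / 2 - C (-e) z / t)
      + 2 * B e z * (- A e z * B (-e) z - (B e z - B (-e) z) / 2))) (at t)"
    unfolding E_def z_def
    by (auto intro!: derivative_eq_intros DC2[OF assms(1,2)] DB2[OF assms(1,2)])
  moreover have "2 * C e z * (B 1 z * B (-1) z - (C e z - C (-e) z) / 2 - C (-e) z / t)
      + 2 * B e z * (- A e z * B (-e) z - (B e z - B (-e) z) / 2)
      = - E e z + (1 - 2 / t) * C e z * C (-e) z + (1 - 2 * p z / t) * B e z * B (-e) z"
    using assms(2) assms(1) t0 unfolding E_def C_def z_def
    by (auto simp: field_simps power2_eq_square)
  ultimately show ?thesis by simp
qed

lemma DBsq:
  fixes x e t :: real
  assumes "t0 < t" "e = 1 \<or> e = -1"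
  defines "z \<equiv> (t, x + e * exp (- t))"
  shows "((\<lambda>s. (B e (s, x + e * exp (- s)))\<^sup>2) has_real_derivative
     (- (B e z)\<^sup>2 + (1 - 2 * A e z) * B e z * B (-e) z)) (at t)"
proof -
  have "((\<lambda>s. (B e (s, x + e * exp (- s)))\<^sup>2) has_real_derivative
     (2 * B e z * (- A e z * B (-e) z - (B e z - B (-e) z) / 2))) (at t)"
    unfolding z_def
    by (auto intro!: derivative_eq_intros DB2[OF assms(1,2)])
  moreover have "2 * B e z * (- A e z * B (-e) z - (B e z - B (-e) z) / 2)
      = - (B e z)\<^sup>2 + (1 - 2 * A e z) * B e z * B (-e) z"
    by (simp add: field_simps power2_eq_square)
  ultimately show ?thesis by simp
qed

end

context wm begin

definition "S0 e = (SUP x. E e (t0, x))"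
definition "F0 = (S0 1 + S0 (-1)) / 2"
definition "eps = ((\<gamma> - \<alpha> / 2)\<^sup>2 - (\<gamma> - \<alpha>)\<^sup>2) / 4"
definition "K = sqrt (F0 + 2 * eps)"
definition "w e t = (2 * F0 * (t0 / t)\<^sup>2 + e * (S0 1 - S0 (-1)) * exp (- (t - t0))) / 2
   + eps * (2 * (t0 / t)\<^sup>2 - (t0 / t) ^ 3)"

lemma E_nonneg: "E e z \<ge> 0" by (simp add: E_def)

lemma bddE0: "bdd_above (range (\<lambda>x. E e (t0, x)))"
proof -
  have "\<exists>M. \<forall>t\<in>{t0..t0}. \<forall>x. E e (t, x) \<le> M"
    by (rule bdd_per) (auto intro: continuous_on_subset[OF cE] perE)
  then show ?thesis by (auto simp: bdd_above_def)
qed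

lemma E0le: "E e (t0, x) \<le> S0 e"
  unfolding S0_def by (rule cSUP_upper[OF _ bddE0]) simp

lemma S0_nonneg: "S0 e \<ge> 0"
  using E0le[of e 0] E_nonneg[of e "(t0, 0)"] by linarith

lemma F0_nonneg: "F0 \<ge> 0" using S0_nonneg[of 1] S0_nonneg[of "-1"] by (simp add: F0_def)

lemma F0_bound: "F0 \<le> (\<gamma> - \<alpha>)\<^sup>2"
proof -
  have sq: "(exp y * m)\<^sup>2 = exp (2 * y) * m\<^sup>2" for y m :: real
    by (simp add: power_mult_distrib exp2 power2_eq_square)
  have "S0 1 = (SUP x. (p1 (t0, x) - p (t0, x) / t0 + exp (- t0) * p2 (t0, x))\<^sup>2
                  + exp (2 * p (t0, x)) * (q1 (t0, x) + exp (- t0) * q2 (t0, x))\<^sup>2)"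
    unfolding S0_def by (rule SUP_cong[OF refl]) (unfold E_def C_def A_def B_def sq, simp add: algebra_simps)
  moreover have "S0 (-1) = (SUP x. (p1 (t0, x) - p (t0, x) / t0 - exp (- t0) * p2 (t0, x))\<^sup>2
                  + exp (2 * p (t0, x)) * (q1 (t0, x) - exp (- t0) * q2 (t0, x))\<^sup>2)"
    unfolding S0_def by (rule SUP_cong[OF refl]) (unfold E_def C_def A_def B_def sq, simp add: algebra_simps)
  ultimately show ?thesis using Fb by (simp add: F0_def)
qed

lemma eps_pos: "eps > 0"
proof -
  have "\<gamma> - \<alpha> < \<gamma> - \<alpha> / 2" "0 \<le> \<gamma> - \<alpha>" using alpha by auto
  then have "(\<gamma> - \<alpha>)\<^sup>2 < (\<gamma> - \<alpha> / 2)\<^sup>2" by (rule power_strict_mono) auto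
  then show ?thesis by (simp add: eps_def)
qed

lemma K_facts: "K \<ge> 0" "K\<^sup>2 = F0 + 2 * eps" "K < \<gamma> - \<alpha> / 2"
proof -
  show "K \<ge> 0" using F0_nonneg eps_pos by (simp add: K_def)
  show "K\<^sup>2 = F0 + 2 * eps" using F0_nonneg eps_pos by (simp add: K_def)
  have "F0 + 2 * eps = F0 + ((\<gamma> - \<alpha> / 2)\<^sup>2 - (\<gamma> - \<alpha>)\<^sup>2) / 2" by (simp add: eps_def)
  moreover have "(\<gamma> - \<alpha>)\<^sup>2 < (\<gamma> - \<alpha> / 2)\<^sup>2" using eps_pos by (simp add: eps_def)
  ultimately have "F0 + 2 * eps < (\<gamma> - \<alpha> / 2)\<^sup>2"
    using F0_bound by argo
  then have "K < sqrt ((\<gamma> - \<alpha> / 2)\<^sup>2)" unfolding K_def by (rule real_sqrt_less_mono)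
  then show "K < \<gamma> - \<alpha> / 2" using alpha by simp
qed

lemma w_init: "e = 1 \<or> e = -1 \<Longrightarrow> w e t0 = S0 e + eps"
  using t0 by (auto simp: w_def F0_def field_simps)

lemma w_sum: "t > 0 \<Longrightarrow> w 1 t + w (-1) t \<le> 2 * K\<^sup>2 * (t0 / t)\<^sup>2"
proof -
  assume t: "t > 0"
  have "eps * (t0 / t) ^ 3 \<ge> 0" using t t0 eps_pos by simp
  moreover have "w 1 t + w (-1) t = 2 * F0 * (t0 / t)\<^sup>2 + 2 * eps * (2 * (t0 / t)\<^sup>2 - (t0 / t) ^ 3)"
    by (simp add: w_def field_simps)
  ultimately show ?thesis by (simp add: K_facts(2) algebra_simps)
qed

lemma Dw: "t > 0 \<Longrightarrow> e = 1 \<or> e = -1 \<Longrightarrow>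
  (w e has_real_derivative (- w e t + (1 - 2 / t) * (w 1 t + w (-1) t) / 2 + eps * t0 ^ 3 / t ^ 4)) (at t)"
proof -
  assume t: "t > 0" and e: "e = 1 \<or> e = -1"
  define u where "u = t0 / t"
  define v where "v = 1 / t"
  have "((\<lambda>t. w e t) has_real_derivative
     (- 2 * F0 * (t0 / t)\<^sup>2 * (1 / t) - e * (S0 1 - S0 (-1)) * exp (- (t - t0)) / 2
      + eps * (- 4 * (t0 / t)\<^sup>2 * (1 / t) + 3 * (t0 / t) ^ 3 * (1 / t)))) (at t)"
    unfolding w_def using t
    by (auto intro!: derivative_eq_intros simp: power2_eq_square power3_eq_cube field_simps)
  moreover have "- 2 * F0 * (t0 / t)\<^sup>2 * (1 / t) - e * (S0 1 - S0 (-1)) * exp (- (t - t0)) / 2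
      + eps * (- 4 * (t0 / t)\<^sup>2 * (1 / t) + 3 * (t0 / t) ^ 3 * (1 / t))
     = - w e t + (1 - 2 / t) * (w 1 t + w (-1) t) / 2 + eps * t0 ^ 3 / t ^ 4"
  proof -
    have 1: "t0 / t = u" "1 / t = v" "2 / t = 2 * v" "eps * t0 ^ 3 / t ^ 4 = eps * u ^ 3 * v"
      using t by (simp_all add: u_def v_def field_simps power3_eq_cube power4_eq_xxxx)
    show ?thesis unfolding w_def 1 using e
      by (auto simp: field_simps power2_eq_square power3_eq_cube)
  qed
  ultimately show ?thesis by simp
qed

lemma cont_w: "continuous_on {t0..} (w e)"
  unfolding w_def using t0 by (intro continuous_intros) auto

end

context wm begin

lemma Dline: "t0 < u \<Longrightarrow> ((\<lambda>v. p (v, x)) has_real_derivative p1 (u, x)) (at u)"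
proof -
  assume u: "t0 < u"
  have "(p has_derivative (\<lambda>(h, k). p1 (u, x) * h + p2 (u, x) * k)) (at (u, x + 0 * exp (- u)))"
    using dp_at[of "(u, x)"] u by simp
  from curve_deriv[OF this] show ?thesis by simp
qed

lemma key_drift:
  assumes "u > 0" "E 1 (u, x) \<le> w 1 u" "E (-1) (u, x) \<le> w (-1) u"
  shows "\<bar>p1 (u, x) - p (u, x) / u\<bar> \<le> K * t0 / u"
proof -
  define a where "a = C 1 (u, x)"
  define b where "b = C (-1) (u, x)"
  have 1: "p1 (u, x) - p (u, x) / u = (a + b) / 2" by (simp add: a_def b_def C_def A_def)
  have "(a + b)\<^sup>2 \<le> 2 * (a\<^sup>2 + b\<^sup>2)"
  proof -
    have "(a + b)\<^sup>2 = 2 * (a\<^sup>2 + b\<^sup>2) - (a - b)\<^sup>2" by (simp add: power2_eq_square algebra_simps)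
    then show ?thesis by simp
  qed
  also have "\<dots> \<le> 2 * (E 1 (u, x) + E (-1) (u, x))"
    by (simp add: a_def b_def E_def)
  also have "\<dots> \<le> 2 * (w 1 u + w (-1) u)" using assms by simp
  also have "\<dots> \<le> 2 * (2 * K\<^sup>2 * (t0 / u)\<^sup>2)" using w_sum[OF assms(1)] by (rule mult_left_mono) simp
  also have "\<dots> = 4 * K\<^sup>2 * (t0 / u)\<^sup>2" by simp
  finally have ab0: "(a + b)\<^sup>2 \<le> 4 * K\<^sup>2 * (t0 / u)\<^sup>2" .
  have ab: "(a + b)\<^sup>2 \<le> 4 * (K\<^sup>2 * (t0 / u)\<^sup>2)" using ab0 by (simp only: mult.assoc)
  have "(a + b)\<^sup>2 / 4 \<le> 4 * (K\<^sup>2 * (t0 / u)\<^sup>2) / 4" using ab by (rule divide_right_mono) simp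
  then have ab2: "(a + b)\<^sup>2 / 4 \<le> K\<^sup>2 * (t0 / u)\<^sup>2" by simp
  have e1: "((a + b) / 2)\<^sup>2 = (a + b)\<^sup>2 / 4" by (simp add: power_divide)
  have e2: "(K * t0 / u)\<^sup>2 = K\<^sup>2 * (t0 / u)\<^sup>2"
    by (simp add: power_mult_distrib power_divide)
  have sq: "\<bar>(a + b) / 2\<bar>\<^sup>2 \<le> (K * t0 / u)\<^sup>2" unfolding power2_abs e1 e2 by (rule ab2)
  have nn: "0 \<le> K * t0 / u" using K_facts(1) t0 assms(1) by simp
  have "\<bar>(a + b) / 2\<bar> \<le> K * t0 / u" by (rule power2_le_imp_le[OF sq nn])
  then show ?thesis by (simp only: 1)
qed

lemma drift:
  assumes bnd: "\<And>s y e'. t0 \<le> s \<Longrightarrow> s \<le> T \<Longrightarrow> e' = 1 \<or> e' = -1 \<Longrightarrow> E e' (s, y) \<le> w e' s"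
    and s: "t0 \<le> s" "s \<le> T"
  shows "(p (t0, x) / t0 - K) * s + K * t0 \<le> p (s, x)" "p (s, x) \<le> (p (t0, x) / t0 + K) * s - K * t0"
proof -
  have key: "\<bar>p1 (u, x) - p (u, x) / u\<bar> \<le> K * t0 / u" if "t0 \<le> u" "u \<le> s" for u
    using key_drift[of u x] bnd[where s=u and y=x and e'=1] bnd[where s=u and y=x and e'="-1"] that s t0 by auto
  have cpx: "continuous_on {t0..s} (\<lambda>v. p (v, x))"
    by (rule continuous_on_compose2[OF cp]) (auto intro: continuous_intros)
  have D1: "((\<lambda>v. p (v, x) / v - K * t0 / v) has_real_derivative
      ((p1 (u, x) - p (u, x) / u) + K * t0 / u) / u) (at u)" if "t0 < u" for u
  proof -
    have "u > 0" using that t0 by simp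
    then show ?thesis
      by (auto intro!: derivative_eq_intros Dline[OF that] simp: field_simps power2_eq_square)
  qed
  have D2: "((\<lambda>v. p (v, x) / v + K * t0 / v) has_real_derivative
      ((p1 (u, x) - p (u, x) / u) - K * t0 / u) / u) (at u)" if "t0 < u" for u
  proof -
    have "u > 0" using that t0 by simp
    then show ?thesis
      by (auto intro!: derivative_eq_intros Dline[OF that] simp: field_simps power2_eq_square)
  qed
  have "(\<lambda>v. p (v, x) / v - K * t0 / v) t0 \<le> (\<lambda>v. p (v, x) / v - K * t0 / v) s"
  proof (rule DERIV_nonneg_imp_increasing_open[OF s(1)])
    fix u assume u: "t0 < u" "u < s"
    have "- (K * t0 / u) \<le> p1 (u, x) - p (u, x) / u" using key[of u] u by auto
    then have "0 \<le> ((p1 (u, x) - p (u, x) / u) + K * t0 / u) / u" using u t0 by simp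
    then show "\<exists>y. ((\<lambda>v. p (v, x) / v - K * t0 / v) has_real_derivative y) (at u) \<and> 0 \<le> y"
      using D1[OF u(1)] by blast
  next
    show "continuous_on {t0..s} (\<lambda>v. p (v, x) / v - K * t0 / v)"
      using t0 by (intro continuous_intros cpx) auto
  qed
  then have "p (t0, x) / t0 - K \<le> p (s, x) / s - K * t0 / s" using t0 by simp
  then have "(p (t0, x) / t0 - K) * s \<le> (p (s, x) / s - K * t0 / s) * s"
    using s t0 by (intro mult_right_mono) auto
  moreover have "(p (s, x) / s - K * t0 / s) * s = p (s, x) - K * t0"
    using s t0 by (simp add: field_simps)
  ultimately show "(p (t0, x) / t0 - K) * s + K * t0 \<le> p (s, x)" by linarith
  have "(\<lambda>v. p (v, x) / v + K * t0 / v) t0 \<ge> (\<lambda>v. p (v, x) / v + K * t0 / v) s"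
  proof (rule DERIV_nonpos_imp_decreasing_open[OF s(1)])
    fix u assume u: "t0 < u" "u < s"
    have "p1 (u, x) - p (u, x) / u \<le> K * t0 / u" using key[of u] u by auto
    then have "((p1 (u, x) - p (u, x) / u) - K * t0 / u) / u \<le> 0" using u t0
      by (simp add: divide_nonpos_pos)
    then show "\<exists>y. ((\<lambda>v. p (v, x) / v + K * t0 / v) has_real_derivative y) (at u) \<and> y \<le> 0"
      using D2[OF u(1)] by blast
  next
    show "continuous_on {t0..s} (\<lambda>v. p (v, x) / v + K * t0 / v)"
      using t0 by (intro continuous_intros cpx) auto
  qed
  then have "p (s, x) / s + K * t0 / s \<le> p (t0, x) / t0 + K" using t0 by simp
  then have "(p (s, x) / s + K * t0 / s) * s \<le> (p (t0, x) / t0 + K) * s"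
    using s t0 by (intro mult_right_mono) auto
  moreover have "(p (s, x) / s + K * t0 / s) * s = p (s, x) + K * t0"
    using s t0 by (simp add: field_simps)
  ultimately show "p (s, x) \<le> (p (t0, x) / t0 + K) * s - K * t0" by linarith
qed

lemma pbounds:
  assumes bnd: "\<And>s y e'. t0 \<le> s \<Longrightarrow> s \<le> T \<Longrightarrow> e' = 1 \<or> e' = -1 \<Longrightarrow> E e' (s, y) \<le> w e' s"
    and s: "t0 \<le> s" "s \<le> T"
  shows "1 \<le> p (s, x)" "p (s, x) \<le> s - 1" "(\<gamma> - K) * s \<le> p (s, x)" "p (s, x) \<le> (1 - \<gamma> + K) * s"
proof -
  define r where "r = p (t0, x) / t0"
  have r: "\<gamma> \<le> r" "r \<le> 1 - \<gamma>" using init2[of x] by (auto simp: r_def)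
  have pr: "p (t0, x) = r * t0" using t0 by (simp add: r_def)
  have Kg: "K \<le> \<gamma>" using K_facts(3) alpha by simp
  have lo: "(r - K) * s + K * t0 \<le> p (s, x)" and hi: "p (s, x) \<le> (r + K) * s - K * t0"
    using drift[OF bnd s] by (simp_all add: r_def)
  have "(r - K) * t0 \<le> (r - K) * s" using s r Kg by (intro mult_left_mono) auto
  then show "1 \<le> p (s, x)" using lo init1[of x] pr by (simp add: algebra_simps)
  have "(r + K - 1) * s \<le> (r + K - 1) * t0" using s r Kg by (intro mult_left_mono_neg) auto
  then show "p (s, x) \<le> s - 1" using hi init1[of x] pr by (simp add: algebra_simps)
  have "(\<gamma> - K) * s \<le> (r - K) * s" using s r t0 by (intro mult_right_mono) auto
  moreover have "K * t0 \<ge> 0" using K_facts(1) t0 by simp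
  ultimately show "(\<gamma> - K) * s \<le> p (s, x)" using lo by linarith
  have "(r + K) * s \<le> (1 - \<gamma> + K) * s" using s r t0 by (intro mult_right_mono) auto
  then show "p (s, x) \<le> (1 - \<gamma> + K) * s" using hi \<open>K * t0 \<ge> 0\<close> by linarith
qed

end

lemma amgm1: "(a::real) * b \<le> (a\<^sup>2 + b\<^sup>2) / 2"
proof -
  have "0 \<le> (a - b)\<^sup>2" by simp
  moreover have "(a - b)\<^sup>2 = a\<^sup>2 + b\<^sup>2 - 2 * (a * b)" by (simp add: power2_eq_square algebra_simps)
  ultimately have "2 * (a * b) \<le> a\<^sup>2 + b\<^sup>2" by linarith
  then show ?thesis by (simp add: field_simps)
qed

lemma amgm2:
  fixes k c a b :: real
  assumes "\<bar>k\<bar> \<le> c"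
  shows "k * a * b \<le> c * ((a\<^sup>2 + b\<^sup>2) / 2)"
proof -
  have "k * a * b \<le> \<bar>k * a * b\<bar>" by (rule abs_ge_self)
  also have "\<dots> = \<bar>k\<bar> * (\<bar>a\<bar> * \<bar>b\<bar>)" by (simp add: abs_mult)
  also have "\<dots> \<le> c * (\<bar>a\<bar> * \<bar>b\<bar>)" using assms by (intro mult_right_mono) auto
  also have "\<dots> \<le> c * ((\<bar>a\<bar>\<^sup>2 + \<bar>b\<bar>\<^sup>2) / 2)"
    using assms by (intro mult_left_mono amgm1) auto
  also have "\<dots> = c * ((a\<^sup>2 + b\<^sup>2) / 2)" by simp
  finally show ?thesis .
qed

context wm begin

lemma boot1:
  assumes "t0 \<le> t" "e = 1 \<or> e = -1"
  shows "E e (t, y) < w e t"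
proof (rule barrier[where f = E and W = w and a = t0, OF _ _ _ _ _ assms])
  show "continuous_on ({t0..} \<times> UNIV) (E e)" for e by (rule cE)
  show "continuous_on {t0..} (w e)" for e by (rule cont_w)
  show "E e (t, x + 2 * pi) = E e (t, x)" if "t0 \<le> t" for e t x using that by (rule perE)
  show "E e (t0, y) < w e t0" if "e = 1 \<or> e = -1" for e y
    using E0le[of e y] w_init[OF that] eps_pos by linarith
next
  fix T e x0
  assume T: "t0 < T" and e: "e = 1 \<or> e = -1"
    and bnd: "\<And>s y e'. t0 \<le> s \<Longrightarrow> s \<le> T \<Longrightarrow> e' = 1 \<or> e' = -1 \<Longrightarrow> E e' (s, y) \<le> w e' s"
    and eq: "E e (T, x0 + e * exp (- T)) = w e T"
  define z where "z = (T, x0 + e * exp (- T))"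
  have T0: "T > 0" "T \<ge> 2" using T t0 by auto
  have p1: "1 \<le> p z" unfolding z_def by (rule pbounds(1)[OF bnd]) (use T in auto)
  have p2: "p z \<le> T - 1" unfolding z_def by (rule pbounds(2)[OF bnd]) (use T in auto)
  define c where "c = 1 - 2 / T"
  define k where "k = 1 - 2 * p z / T"
  have c0: "0 \<le> c" using T0 by (simp add: c_def field_simps)
  have "2 / T \<le> 2 * p z / T" using p1 T0 by (intro divide_right_mono) auto
  moreover have "2 * p z / T \<le> 2 * (T - 1) / T" using p2 T0 by (intro divide_right_mono) auto
  moreover have "2 * (T - 1) / T = 2 - 2 / T" using T0 by (simp add: field_simps)
  ultimately have kc: "\<bar>k\<bar> \<le> c" unfolding k_def c_def by (simp add: abs_le_iff)
  have ee: "E e z + E (-e) z = E 1 z + E (-1) z" using e by auto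
  have sumb: "E 1 z + E (-1) z \<le> w 1 T + w (-1) T"
    using bnd[where s=T and y="snd z" and e'=1] bnd[where s=T and y="snd z" and e'="-1"] T
    by (simp add: z_def)
  have a1: "c * C e z * C (-e) z \<le> c * (((C e z)\<^sup>2 + (C (-e) z)\<^sup>2) / 2)"
    by (rule amgm2) (use c0 in simp)
  have a2: "k * B e z * B (-e) z \<le> c * (((B e z)\<^sup>2 + (B (-e) z)\<^sup>2) / 2)"
    by (rule amgm2[OF kc])
  have "c * (((C e z)\<^sup>2 + (C (-e) z)\<^sup>2) / 2) + c * (((B e z)\<^sup>2 + (B (-e) z)\<^sup>2) / 2)
      = c * ((E e z + E (-e) z) / 2)" by (simp add: E_def field_simps)
  also have "\<dots> \<le> c * ((w 1 T + w (-1) T) / 2)" using ee sumb c0 by (intro mult_left_mono) auto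
  finally have a3: "c * C e z * C (-e) z + k * B e z * B (-e) z \<le> c * ((w 1 T + w (-1) T) / 2)"
    using a1 a2 by linarith
  have epos: "eps * t0 ^ 3 / T ^ 4 > 0" using eps_pos t0 T0 by simp
  have DD: "((\<lambda>s. E e (s, x0 + e * exp (- s)) - w e s) has_real_derivative
     ((- E e z + (1 - 2 / T) * C e z * C (-e) z + (1 - 2 * p z / T) * B e z * B (-e) z)
      - (- w e T + (1 - 2 / T) * (w 1 T + w (-1) T) / 2 + eps * t0 ^ 3 / T ^ 4))) (at T)"
    unfolding z_def by (rule DERIV_diff[OF DE[OF T e] Dw[OF T0(1) e]])
  have "(- E e z + (1 - 2 / T) * C e z * C (-e) z + (1 - 2 * p z / T) * B e z * B (-e) z)
      - (- w e T + (1 - 2 / T) * (w 1 T + w (-1) T) / 2 + eps * t0 ^ 3 / T ^ 4)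
     = (c * C e z * C (-e) z + k * B e z * B (-e) z) - c * ((w 1 T + w (-1) T) / 2) - eps * t0 ^ 3 / T ^ 4"
    using eq by (simp add: z_def c_def k_def)
  also have "\<dots> < 0" using a3 epos by linarith
  finally show "\<exists>D<0. ((\<lambda>s. E e (s, x0 + e * exp (- s)) - w e s) has_real_derivative D) (at T)"
    using DD by blast
qed

end

context wm begin

lemma Ebnd: "t0 \<le> t \<Longrightarrow> e = 1 \<or> e = -1 \<Longrightarrow> E e (t, y) \<le> w e t"
  using boot1 less_imp_le by blast

lemma pglob: assumes "t0 \<le> t" shows "(\<gamma> - K) * t \<le> p (t, y)" "p (t, y) \<le> (1 - \<gamma> + K) * t"
  using pbounds(3,4)[OF Ebnd, of t t y] assms by auto

lemma Cbnd:
  assumes t: "t0 \<le> t" and e: "e = 1 \<or> e = -1"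
  shows "\<bar>C e (t, y)\<bar> \<le> 2 * K * t0 / t"
proof -
  have t0': "t > 0" using t t0 by simp
  have "(C e (t, y))\<^sup>2 \<le> E e (t, y)" by (simp add: E_def)
  also have "\<dots> \<le> w e t" using Ebnd[OF t e] .
  also have "\<dots> \<le> w e t + w (-e) t"
    using boot1[OF t, of "-e" y] E_nonneg[of "-e" "(t, y)"] e by auto
  also have "\<dots> = w 1 t + w (-1) t" using e by auto
  also have "\<dots> \<le> 2 * K\<^sup>2 * (t0 / t)\<^sup>2" by (rule w_sum[OF t0'])
  also have "\<dots> \<le> 4 * K\<^sup>2 * (t0 / t)\<^sup>2" by (intro mult_right_mono) auto
  also have "\<dots> = (2 * K * t0 / t)\<^sup>2" by (simp add: power_mult_distrib power_divide)
  finally have "\<bar>C e (t, y)\<bar>\<^sup>2 \<le> (2 * K * t0 / t)\<^sup>2" by (simp only: power2_abs)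
  moreover have "0 \<le> 2 * K * t0 / t" using K_facts(1) t0 t0' by simp
  ultimately show ?thesis by (rule power2_le_imp_le)
qed

definition "mu = (\<gamma> - K - \<alpha> / 2) / 2"
definition "t1 = max t0 (2 * K * t0 / mu)"

lemma mu_pos: "mu > 0" using K_facts(3) by (simp add: mu_def)

lemma t1_ge: "t0 \<le> t1" by (simp add: t1_def)

lemma Abnd:
  assumes t: "t1 \<le> t" and e: "e = 1 \<or> e = -1"
  shows "\<bar>1 - 2 * A e (t, y)\<bar> \<le> 1 - \<alpha> - 2 * mu"
proof -
  have tt0: "t0 \<le> t" using t t1_ge by simp
  have tp: "t > 0" using tt0 t0 by simp
  have "2 * K * t0 / mu \<le> t" using t by (simp add: t1_def)
  then have "2 * K * t0 \<le> mu * t" using mu_pos by (simp add: field_simps)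
  then have "2 * K * t0 / t \<le> mu" using tp by (simp add: field_simps)
  then have cb: "\<bar>C e (t, y)\<bar> \<le> mu" using Cbnd[OF tt0 e, of y] by linarith
  have "(\<gamma> - K) * t / t \<le> p (t, y) / t" using pglob(1)[OF tt0, of y] tp by (intro divide_right_mono) auto
  then have lo: "\<gamma> - K \<le> p (t, y) / t" using tp by simp
  have "p (t, y) / t \<le> (1 - \<gamma> + K) * t / t" using pglob(2)[OF tt0, of y] tp by (intro divide_right_mono) auto
  then have hi: "p (t, y) / t \<le> 1 - \<gamma> + K" using tp by simp
  have A: "A e (t, y) = C e (t, y) + p (t, y) / t" by (simp add: C_def)
  have m: "2 * mu = \<gamma> - K - \<alpha> / 2" by (simp add: mu_def)
  show ?thesis unfolding A abs_le_iff using cb lo hi m by (simp add: abs_le_iff; argo)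
qed

lemma Bbnd_init: "\<exists>M. \<forall>x e. e = 1 \<or> e = -1 \<longrightarrow> (B e (t1, x))\<^sup>2 \<le> M"
proof -
  have "\<exists>M. \<forall>t\<in>{t1..t1}. \<forall>x. (\<lambda>z. (B 1 z)\<^sup>2 + (B (-1) z)\<^sup>2) (t, x) \<le> M"
  proof (rule bdd_per)
    show "continuous_on ({t1..t1} \<times> UNIV) (\<lambda>z. (B 1 z)\<^sup>2 + (B (-1) z)\<^sup>2)"
      using t1_ge by (intro continuous_intros continuous_on_subset[OF cB]) auto
    show "(\<lambda>z. (B 1 z)\<^sup>2 + (B (-1) z)\<^sup>2) (t, x + 2 * pi) = (\<lambda>z. (B 1 z)\<^sup>2 + (B (-1) z)\<^sup>2) (t, x)"
      if "t \<in> {t1..t1}" for t x using that t1_ge perB by simp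
  qed simp
  then obtain M where M: "\<And>x. (B 1 (t1, x))\<^sup>2 + (B (-1) (t1, x))\<^sup>2 \<le> M" by auto
  have "(B e (t1, x))\<^sup>2 \<le> M" if "e = 1 \<or> e = -1" for e x
  proof -
    have "(B 1 (t1, x))\<^sup>2 \<le> M" "(B (-1) (t1, x))\<^sup>2 \<le> M"
      using M[of x] zero_le_power2[of "B 1 (t1, x)"] zero_le_power2[of "B (-1) (t1, x)"] by linarith+
    then show ?thesis using that by auto
  qed
  then show ?thesis by blast
qed

definition "M1 = (SOME M. \<forall>x e. e = 1 \<or> e = -1 \<longrightarrow> (B e (t1, x))\<^sup>2 \<le> M)"

lemma M1: "e = 1 \<or> e = -1 \<Longrightarrow> (B e (t1, x))\<^sup>2 \<le> M1"
  using someI_ex[OF Bbnd_init] unfolding M1_def by blast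

definition "Wf t = (\<bar>M1\<bar> + 1) * exp (- \<alpha> * (t - t1))"

lemma Wf_pos: "Wf t > 0" by (simp add: Wf_def add_pos_nonneg)

lemma boot2:
  assumes "t1 \<le> t" "e = 1 \<or> e = -1"
  shows "(B e (t, y))\<^sup>2 < Wf t"
proof (rule barrier[where f = "\<lambda>e z. (B e z)\<^sup>2" and W = "\<lambda>e. Wf" and a = t1, OF _ _ _ _ _ assms])
  show "continuous_on ({t1..} \<times> UNIV) (\<lambda>z. (B e z)\<^sup>2)" for e
    using t1_ge by (intro continuous_on_subset[OF cB]) auto
  show "continuous_on {t1..} Wf" unfolding Wf_def by (intro continuous_intros)
  show "(B e (t, x + 2 * pi))\<^sup>2 = (B e (t, x))\<^sup>2" if "t1 \<le> t" for e t x
    using that t1_ge perB[of t e x] by simp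
  show "(B e (t1, y))\<^sup>2 < Wf t1" if "e = 1 \<or> e = -1" for e y
    using M1[OF that, of y] by (simp add: Wf_def)
next
  fix T e x0
  assume T: "t1 < T" and e: "e = 1 \<or> e = -1"
    and bnd: "\<And>s y e'. t1 \<le> s \<Longrightarrow> s \<le> T \<Longrightarrow> e' = 1 \<or> e' = -1 \<Longrightarrow> (B e' (s, y))\<^sup>2 \<le> Wf s"
    and eq: "(B e (T, x0 + e * exp (- T)))\<^sup>2 = Wf T"
  define z where "z = (T, x0 + e * exp (- T))"
  have T0: "t0 < T" using T t1_ge by simp
  define k where "k = 1 - 2 * A e z"
  have kb: "\<bar>k\<bar> \<le> 1 - \<alpha> - 2 * mu" unfolding k_def z_def by (rule Abnd) (use T e in auto)
  have a2: "k * B e z * B (-e) z \<le> (1 - \<alpha> - 2 * mu) * (((B e z)\<^sup>2 + (B (-e) z)\<^sup>2) / 2)"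
    by (rule amgm2[OF kb])
  have "(B e z)\<^sup>2 + (B (-e) z)\<^sup>2 \<le> Wf T + Wf T"
    using bnd[where s=T and y="snd z" and e'=e] bnd[where s=T and y="snd z" and e'="-e"] T e
    by (intro add_mono) (auto simp: z_def)
  then have "((B e z)\<^sup>2 + (B (-e) z)\<^sup>2) / 2 \<le> Wf T" by simp
  then have a3: "(1 - \<alpha> - 2 * mu) * (((B e z)\<^sup>2 + (B (-e) z)\<^sup>2) / 2) \<le> (1 - \<alpha> - 2 * mu) * Wf T"
    using kb by (intro mult_left_mono) auto
  have DW: "(Wf has_real_derivative (- \<alpha> * Wf T)) (at T)"
    unfolding Wf_def by (auto intro!: derivative_eq_intros simp: algebra_simps)
  have DD: "((\<lambda>s. (B e (s, x0 + e * exp (- s)))\<^sup>2 - Wf s) has_real_derivative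
     ((- (B e z)\<^sup>2 + (1 - 2 * A e z) * B e z * B (-e) z) - (- \<alpha> * Wf T))) (at T)"
    unfolding z_def by (rule DERIV_diff[OF DBsq[OF T0 e] DW])
  have "(- (B e z)\<^sup>2 + (1 - 2 * A e z) * B e z * B (-e) z) - (- \<alpha> * Wf T)
      = - Wf T + k * B e z * B (-e) z + \<alpha> * Wf T"
    using eq by (simp add: z_def k_def)
  also have "\<dots> \<le> - Wf T + (1 - \<alpha> - 2 * mu) * Wf T + \<alpha> * Wf T" using a2 a3 by linarith
  also have "\<dots> = - (2 * mu) * Wf T" by (simp add: algebra_simps)
  also have "\<dots> < 0" using mu_pos Wf_pos[of T] by simp
  finally show "\<exists>D<0. ((\<lambda>s. (B e (s, x0 + e * exp (- s)))\<^sup>2 - Wf s) has_real_derivative D) (at T)"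
    using DD by blast
qed

lemma final:
  "\<exists>C. \<forall>t\<ge>t0. (SUP x. \<bar>exp (2 * p (t, x)) * ((q1 (t, x))\<^sup>2 + exp (-2 * t) * (q2 (t, x))\<^sup>2)\<bar>)
      \<le> C * exp (- \<alpha> * t)"
proof -
  define G where "G z = ((B 1 z)\<^sup>2 + (B (-1) z)\<^sup>2) / 2" for z
  have idG: "\<bar>exp (2 * p (t, x)) * ((q1 (t, x))\<^sup>2 + exp (-2 * t) * (q2 (t, x))\<^sup>2)\<bar> = G (t, x)" for t x
  proof -
    have "exp (2 * p (t, x)) * ((q1 (t, x))\<^sup>2 + exp (-2 * t) * (q2 (t, x))\<^sup>2) = G (t, x)"
      unfolding G_def B_def exp2 by (simp add: power2_eq_square field_simps)
    moreover have "G (t, x) \<ge> 0" by (simp add: G_def)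
    ultimately show ?thesis by simp
  qed
  have "\<exists>M. \<forall>t\<in>{t0..t1}. \<forall>x. G (t, x) \<le> M"
  proof (rule bdd_per)
    show "continuous_on ({t0..t1} \<times> UNIV) G"
      unfolding G_def by (intro continuous_intros continuous_on_subset[OF cB]) auto
    show "G (t, x + 2 * pi) = G (t, x)" if "t \<in> {t0..t1}" for t x
      using that perB by (simp add: G_def)
  qed (rule t1_ge)
  then obtain M2 where M2: "\<And>t x. t0 \<le> t \<Longrightarrow> t \<le> t1 \<Longrightarrow> G (t, x) \<le> M2" by fastforce
  define CC where "CC = (\<bar>M1\<bar> + 1 + \<bar>M2\<bar>) * exp (\<alpha> * t1)"
  have pt: "G (t, x) \<le> CC * exp (- \<alpha> * t)" if t: "t0 \<le> t" for t x
  proof -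
    have ex: "exp (\<alpha> * t1) * exp (- \<alpha> * t) = exp (- \<alpha> * (t - t1))"
      by (simp add: exp_add[symmetric] algebra_simps)
    show ?thesis
    proof (cases "t1 \<le> t")
      case True
      have "G (t, x) < Wf t"
        using boot2[OF True, of 1 x] boot2[OF True, of "-1" x] by (simp add: G_def)
      also have "Wf t = (\<bar>M1\<bar> + 1) * (exp (\<alpha> * t1) * exp (- \<alpha> * t))" by (simp only: Wf_def ex)
      also have "\<dots> \<le> (\<bar>M1\<bar> + 1 + \<bar>M2\<bar>) * (exp (\<alpha> * t1) * exp (- \<alpha> * t))"
        by (intro mult_right_mono) auto
      also have "\<dots> = CC * exp (- \<alpha> * t)" by (simp add: CC_def)
      finally show ?thesis by simp
    next
      case False
      have "G (t, x) \<le> \<bar>M2\<bar>" using M2[OF t, of x] False by simp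
      also have "\<dots> \<le> \<bar>M2\<bar> * exp (- \<alpha> * (t - t1))"
      proof -
        have "t - t1 \<le> 0" using False by simp
        then have "\<alpha> * (t - t1) \<le> 0" using alpha by (intro mult_nonneg_nonpos) auto
        then have "- \<alpha> * (t - t1) \<ge> 0" by simp
        then have "1 \<le> exp (- \<alpha> * (t - t1))" by simp
        then show ?thesis by (metis abs_ge_zero mult.right_neutral mult_left_mono)
      qed
      also have "\<dots> = \<bar>M2\<bar> * (exp (\<alpha> * t1) * exp (- \<alpha> * t))" by (simp only: ex)
      also have "\<dots> \<le> (\<bar>M1\<bar> + 1 + \<bar>M2\<bar>) * (exp (\<alpha> * t1) * exp (- \<alpha> * t))"
        by (intro mult_right_mono) auto
      also have "\<dots> = CC * exp (- \<alpha> * t)" by (simp add: CC_def)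
      finally show ?thesis .
    qed
  qed
  have "(SUP x. \<bar>exp (2 * p (t, x)) * ((q1 (t, x))\<^sup>2 + exp (-2 * t) * (q2 (t, x))\<^sup>2)\<bar>)
      \<le> CC * exp (- \<alpha> * t)" if "t0 \<le> t" for t
    unfolding idG by (rule cSUP_least) (use pt[OF that] in auto)
  then show ?thesis by blast
qed

end

lemma smooth_ops:
  assumes "smooth_on2 S f"
  obtains D d1 d2 where "f \<in> D" "\<And>g. g \<in> D \<Longrightarrow> d1 g \<in> D" "\<And>g. g \<in> D \<Longrightarrow> d2 g \<in> D"
    "\<And>g z. g \<in> D \<Longrightarrow> z \<in> S \<Longrightarrow> (g has_derivative (\<lambda>(h, k). d1 g z * h + d2 g z * k)) (at z within S)"
proof -
  from assms obtain D where DD: "f \<in> D \<and> (\<forall>g\<in>D. \<exists>g1\<in>D. \<exists>g2\<in>D. \<forall>p\<in>S.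
      (g has_derivative (\<lambda>(h, k). g1 p * h + g2 p * k)) (at p within S))"
    unfolding smooth_on2_def by (rule exE)
  then have D1: "f \<in> D" and D2: "\<forall>g\<in>D. \<exists>g1\<in>D. \<exists>g2\<in>D. \<forall>p\<in>S.
      (g has_derivative (\<lambda>(h, k). g1 p * h + g2 p * k)) (at p within S)"
    by (rule conjunct1, rule conjunct2)
  have "\<forall>g\<in>D. \<exists>gg. fst gg \<in> D \<and> snd gg \<in> D \<and> (\<forall>p\<in>S.
      (g has_derivative (\<lambda>(h, k). fst gg p * h + snd gg p * k)) (at p within S))"
  proof
    fix g assume g: "g \<in> D"
    from D2 g have "\<exists>g1\<in>D. \<exists>g2\<in>D. \<forall>p\<in>S.
      (g has_derivative (\<lambda>(h, k). g1 p * h + g2 p * k)) (at p within S)" by (rule bspec)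
    then obtain g1 g2 where "g1 \<in> D" "g2 \<in> D" "\<forall>p\<in>S. (g has_derivative (\<lambda>(h, k). g1 p * h + g2 p * k)) (at p within S)"
      by (elim bexE)
    then show "\<exists>gg. fst gg \<in> D \<and> snd gg \<in> D \<and> (\<forall>p\<in>S.
      (g has_derivative (\<lambda>(h, k). fst gg p * h + snd gg p * k)) (at p within S))"
      by (intro exI[of _ "(g1, g2)"]) simp
  qed
  from bchoice[OF this] obtain F where F: "\<forall>g\<in>D. fst (F g) \<in> D \<and> snd (F g) \<in> D \<and> (\<forall>p\<in>S.
      (g has_derivative (\<lambda>(h, k). fst (F g) p * h + snd (F g) p * k)) (at p within S))"
    by (rule exE)
  have Fg: "fst (F g) \<in> D \<and> snd (F g) \<in> D \<and> (\<forall>p\<in>S.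
      (g has_derivative (\<lambda>(h, k). fst (F g) p * h + snd (F g) p * k)) (at p within S))" if "g \<in> D" for g
    using F that by (rule bspec)
  show thesis
  proof (rule that[of D "\<lambda>g. fst (F g)" "\<lambda>g. snd (F g)"])
    show "f \<in> D" by (rule D1)
    show "fst (F g) \<in> D" if "g \<in> D" for g using Fg[OF that] by simp
    show "snd (F g) \<in> D" if "g \<in> D" for g using Fg[OF that] by simp
    show "(g has_derivative (\<lambda>(h, k). fst (F g) z * h + snd (F g) z * k)) (at z within S)"
      if "g \<in> D" "z \<in> S" for g z using Fg[OF that(1)] that(2) by simp
  qed
qed

lemma nb: "t0 \<le> t \<Longrightarrow> at t within {t0..} \<noteq> (bot :: real filter)"
proof -
  assume t: "t0 \<le> t"
  show ?thesis
  proof (cases "t = t0")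
    case True
    have "at t0 within {t0..} = at_right t0" by (rule at_within_Ici_at_right)
    moreover have "at_right t0 \<noteq> (bot :: real filter)"
      using trivial_limit_at_right_real[of t0] unfolding trivial_limit_def .
    ultimately show ?thesis using True by simp
  next
    case False
    then have "t \<in> interior {t0..}" using t by (intro interiorI[of "{t0<..}"]) auto
    then have "at t within {t0..} = at t" by (rule at_within_interior)
    then show ?thesis by (simp add: at_neq_bot)
  qed
qed

lemma line_t:
  fixes g :: "real \<times> real \<Rightarrow> real"
  assumes "\<And>z. z \<in> {t0..} \<times> UNIV \<Longrightarrow> (g has_derivative (\<lambda>(h, k). g1 z * h + g2 z * k)) (at z within {t0..} \<times> UNIV)"
    and "t0 \<le> t"
  shows "((\<lambda>s. g (s, x)) has_real_derivative g1 (t, x)) (at t within {t0..})"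
proof -
  have c: "((\<lambda>v. (v, x)) has_derivative (\<lambda>h. (h * 1, h * 0))) (at t within {t0..})"
    by (rule has_derivative_eq_rhs[OF has_derivative_Pair[OF has_derivative_ident has_derivative_const]])
      (simp add: fun_eq_iff)
  have "((\<lambda>v. g (v, x)) has_real_derivative (g1 (t, x) * 1 + g2 (t, x) * 0)) (at t within {t0..})"
    by (rule partial_within[OF assms(1) _ _ c]) (use assms(2) in auto)
  then show ?thesis by simp
qed

lemma line_x:
  fixes g :: "real \<times> real \<Rightarrow> real"
  assumes "\<And>z. z \<in> {t0..} \<times> UNIV \<Longrightarrow> (g has_derivative (\<lambda>(h, k). g1 z * h + g2 z * k)) (at z within {t0..} \<times> UNIV)"
    and "t0 \<le> t"
  shows "((\<lambda>y. g (t, y)) has_real_derivative g2 (t, x)) (at x)"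
proof -
  have c: "((\<lambda>v. (t, v)) has_derivative (\<lambda>h. (h * 0, h * 1))) (at x within UNIV)"
    by (rule has_derivative_eq_rhs[OF has_derivative_Pair[OF has_derivative_const has_derivative_ident]])
      (simp add: fun_eq_iff)
  have "((\<lambda>v. g (t, v)) has_real_derivative (g1 (t, x) * 0 + g2 (t, x) * 1)) (at x within UNIV)"
    by (rule partial_within[OF assms(1) _ _ c]) (use assms(2) in auto)
  then show ?thesis by simp
qed

lemma conv:
  fixes U :: "real \<Rightarrow> real \<Rightarrow> real" and u u1 u2 u11 u12 u21 u22 :: "real \<times> real \<Rightarrow> real"
  assumes duA: "\<forall>z\<in>{t0..} \<times> UNIV. (u has_derivative (\<lambda>(h, k). u1 z * h + u2 z * k)) (at z within {t0..} \<times> UNIV)"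
    and du1A: "\<forall>z\<in>{t0..} \<times> UNIV. (u1 has_derivative (\<lambda>(h, k). u11 z * h + u12 z * k)) (at z within {t0..} \<times> UNIV)"
    and du2A: "\<forall>z\<in>{t0..} \<times> UNIV. (u2 has_derivative (\<lambda>(h, k). u21 z * h + u22 z * k)) (at z within {t0..} \<times> UNIV)"
    and uU: "\<And>t x. u (t, x) = U t x"
    and t: "t0 \<le> t"
  shows "dtau t0 U t x = u1 (t, x)" "dth U t x = u2 (t, x)"
    "dtau t0 (dtau t0 U) t x = u11 (t, x)" "dth (dth U) t x = u22 (t, x)"
proof -
  have du: "(u has_derivative (\<lambda>(h, k). u1 z * h + u2 z * k)) (at z within {t0..} \<times> UNIV)"
    if "z \<in> {t0..} \<times> UNIV" for z using duA that by (rule bspec)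
  have du1: "(u1 has_derivative (\<lambda>(h, k). u11 z * h + u12 z * k)) (at z within {t0..} \<times> UNIV)"
    if "z \<in> {t0..} \<times> UNIV" for z using du1A that by (rule bspec)
  have du2: "(u2 has_derivative (\<lambda>(h, k). u21 z * h + u22 z * k)) (at z within {t0..} \<times> UNIV)"
    if "z \<in> {t0..} \<times> UNIV" for z using du2A that by (rule bspec)
  have a: "dtau t0 U s y = u1 (s, y)" if "t0 \<le> s" for s y
  proof -
    have "((\<lambda>s. U s y) has_real_derivative u1 (s, y)) (at s within {t0..})"
      using line_t[OF du that, of y] by (simp add: uU)
    then show ?thesis unfolding dtau_def
      by (intro vector_derivative_within[OF nb[OF that]])
        (simp add: has_real_derivative_iff_has_vector_derivative)
  qed
  then show "dtau t0 U t x = u1 (t, x)" using t by blast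
  have b: "dth U s y = u2 (s, y)" if "t0 \<le> s" for s y
  proof -
    have "((\<lambda>y. U s y) has_real_derivative u2 (s, y)) (at y)"
      using line_x[OF du that, of y] by (simp add: uU)
    then show ?thesis unfolding dth_def
      by (intro vector_derivative_at) (simp add: has_real_derivative_iff_has_vector_derivative)
  qed
  then show "dth U t x = u2 (t, x)" using t by blast
  have "((\<lambda>s. u1 (s, x)) has_real_derivative u11 (t, x)) (at t within {t0..})"
    using line_t[OF du1 t] .
  then have "((\<lambda>s. dtau t0 U s x) has_real_derivative u11 (t, x)) (at t within {t0..})"
    by (rule has_field_derivative_transform_within[where d = 1]) (use t a in auto)
  then show "dtau t0 (dtau t0 U) t x = u11 (t, x)" unfolding dtau_def[of t0 "dtau t0 U"]
    by (intro vector_derivative_within[OF nb[OF t]])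
      (simp add: has_real_derivative_iff_has_vector_derivative)
  have "dth U t = (\<lambda>y. u2 (t, y))" using b t by auto
  moreover have "((\<lambda>y. u2 (t, y)) has_real_derivative u22 (t, x)) (at x)"
    using line_x[OF du2 t] .
  ultimately show "dth (dth U) t x = u22 (t, x)" unfolding dth_def[of "dth U"]
    by (simp add: vector_derivative_at has_real_derivative_iff_has_vector_derivative)
qed

lemma conv_per:
  fixes U :: "real \<Rightarrow> real \<Rightarrow> real" and u u1 u2 :: "real \<times> real \<Rightarrow> real"
  assumes duA: "\<forall>z\<in>{t0..} \<times> UNIV. (u has_derivative (\<lambda>(h, k). u1 z * h + u2 z * k)) (at z within {t0..} \<times> UNIV)"
    and uU: "\<And>t x. u (t, x) = U t x"
    and perU: "\<And>t x. t0 \<le> t \<Longrightarrow> U t (x + 2 * pi) = U t x"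
    and t: "t0 \<le> t"
  shows "u1 (t, x + 2 * pi) = u1 (t, x)" "u2 (t, x + 2 * pi) = u2 (t, x)"
proof -
  have du: "(u has_derivative (\<lambda>(h, k). u1 z * h + u2 z * k)) (at z within {t0..} \<times> UNIV)"
    if "z \<in> {t0..} \<times> UNIV" for z using duA that by (rule bspec)
  have "((\<lambda>s. u (s, x + 2 * pi)) has_real_derivative u1 (t, x + 2 * pi)) (at t within {t0..})"
    using line_t[OF du t] .
  then have "((\<lambda>s. u (s, x)) has_real_derivative u1 (t, x + 2 * pi)) (at t within {t0..})"
    by (rule has_field_derivative_transform_within[where d = 1]) (use t perU uU in auto)
  moreover have "((\<lambda>s. u (s, x)) has_real_derivative u1 (t, x)) (at t within {t0..})"
    using line_t[OF du t] .
  ultimately show "u1 (t, x + 2 * pi) = u1 (t, x)"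
    unfolding has_real_derivative_iff_has_vector_derivative
    by (rule vector_derivative_unique_within[OF nb[OF t]])
  have "((\<lambda>y. u (t, y)) has_real_derivative u2 (t, x + 2 * pi)) (at (x + 2 * pi))"
    using line_x[OF du t] .
  then have "((\<lambda>y. u (t, y + 2 * pi)) has_real_derivative u2 (t, x + 2 * pi)) (at x)"
    by (simp add: DERIV_shift)
  moreover have "(\<lambda>y. u (t, y + 2 * pi)) = (\<lambda>y. u (t, y))" using perU[OF t] uU by auto
  ultimately have "((\<lambda>y. u (t, y)) has_real_derivative u2 (t, x + 2 * pi)) (at x)" by simp
  moreover have "((\<lambda>y. u (t, y)) has_real_derivative u2 (t, x)) (at x)"
    using line_x[OF du t] .
  ultimately show "u2 (t, x + 2 * pi) = u2 (t, x)" by (rule DERIV_unique)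
qed

lemma lines_at:
  fixes f :: "real \<times> real \<Rightarrow> real"
  assumes "(f has_derivative (\<lambda>(h, k). a * h + b * k)) (at (s, y))"
  shows "((\<lambda>u. f (u, y)) has_real_derivative a) (at s)" "((\<lambda>v. f (s, v)) has_real_derivative b) (at y)"
proof -
  have "(f has_derivative (\<lambda>(h, k). a * h + b * k)) (at (s, y + 0 * exp (- s)))" using assms by simp
  from curve_deriv[OF this] show "((\<lambda>u. f (u, y)) has_real_derivative a) (at s)" by simp
  have c: "((\<lambda>v. (s, v)) has_derivative (\<lambda>h. (0, h))) (at y)"
    by (rule has_derivative_Pair[OF has_derivative_const has_derivative_ident])
  have "((\<lambda>v. f (s, v)) has_derivative (\<lambda>h. (\<lambda>(h, k). a * h + b * k) (0, h))) (at y)"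
    by (rule has_derivative_compose[OF c]) (use assms in simp)
  then show "((\<lambda>v. f (s, v)) has_real_derivative b) (at y)"
    unfolding has_field_derivative_def by (rule has_derivative_eq_rhs) (auto simp: fun_eq_iff)
qed

lemma int_at: "z \<in> {t0<..} \<times> UNIV \<Longrightarrow> at z within {(t0::real)..} \<times> (UNIV :: real set) = at z"
proof -
  assume "z \<in> {t0<..} \<times> UNIV"
  then have "z \<in> interior ({t0..} \<times> (UNIV :: real set))"
    by (intro interiorI[of "{t0<..} \<times> UNIV"]) (auto intro!: open_Times open_greaterThan)
  then show ?thesis by (rule at_within_interior)
qed

lemma contD:
  assumes "\<And>z. z \<in> S \<Longrightarrow> (g has_derivative g' z) (at z within S)"
  shows "continuous_on S g"
  unfolding continuous_on_eq_continuous_within using assms has_derivative_continuous by blast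

theorem lemma2:
  fixes P Q :: "real \<Rightarrow> real \<Rightarrow> real" and t0 \<gamma> \<alpha> :: real
  assumes smoothP: "smooth_on2 ({t0..} \<times> UNIV) (\<lambda>(t, x). P t x)"
    and smoothQ: "smooth_on2 ({t0..} \<times> UNIV) (\<lambda>(t, x). Q t x)"
    and perP: "\<And>t x. t \<ge> t0 \<Longrightarrow> P t (x + 2 * pi) = P t x"
    and perQ: "\<And>t x. t \<ge> t0 \<Longrightarrow> Q t (x + 2 * pi) = Q t x"
    and eqP: "\<And>t x. t \<ge> t0 \<Longrightarrow>
        dtau t0 (dtau t0 P) t x - exp (-2 * t) * dth (dth P) t x
        - exp (2 * P t x) * ((dtau t0 Q t x)\<^sup>2 - exp (-2 * t) * (dth Q t x)\<^sup>2) = 0"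
    and eqQ: "\<And>t x. t \<ge> t0 \<Longrightarrow>
        dtau t0 (dtau t0 Q) t x - exp (-2 * t) * dth (dth Q) t x
        + 2 * (dtau t0 P t x * dtau t0 Q t x - exp (-2 * t) * dth P t x * dth Q t x) = 0"
    and t0: "t0 \<ge> 2"
    and gamma: "\<gamma> > 0"
    and init1: "\<And>x. 1 \<le> P t0 x \<and> P t0 x \<le> t0 - 1"
    and init2: "\<And>x. \<gamma> \<le> P t0 x / t0 \<and> P t0 x / t0 \<le> 1 - \<gamma>"
    and alpha: "0 < \<alpha>" "\<alpha> < \<gamma>"
    and Fbound: "Ffun t0 P Q t0 \<le> (\<gamma> - \<alpha>)\<^sup>2"
  shows "\<exists>C. \<forall>t\<ge>t0.
           (SUP x\<in>UNIV. \<bar>exp (2 * P t x) * ((dtau t0 Q t x)\<^sup>2 + exp (-2 * t) * (dth Q t x)\<^sup>2)\<bar>)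
             \<le> C * exp (-\<alpha> * t)"

proof -
  obtain DP dP1 dP2 where PD: "(\<lambda>(t, x). P t x) \<in> DP" "\<And>g. g \<in> DP \<Longrightarrow> dP1 g \<in> DP" "\<And>g. g \<in> DP \<Longrightarrow> dP2 g \<in> DP"
    "\<And>g z. g \<in> DP \<Longrightarrow> z \<in> {t0..} \<times> UNIV \<Longrightarrow> (g has_derivative (\<lambda>(h, k). dP1 g z * h + dP2 g z * k)) (at z within {t0..} \<times> UNIV)"
    by (rule smooth_ops[OF smoothP]) (rule that; assumption)
  obtain DQ dQ1 dQ2 where QD: "(\<lambda>(t, x). Q t x) \<in> DQ" "\<And>g. g \<in> DQ \<Longrightarrow> dQ1 g \<in> DQ" "\<And>g. g \<in> DQ \<Longrightarrow> dQ2 g \<in> DQ"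
    "\<And>g z. g \<in> DQ \<Longrightarrow> z \<in> {t0..} \<times> UNIV \<Longrightarrow> (g has_derivative (\<lambda>(h, k). dQ1 g z * h + dQ2 g z * k)) (at z within {t0..} \<times> UNIV)"
    by (rule smooth_ops[OF smoothQ]) (rule that; assumption)
  define p where "p = (\<lambda>(t, x). P t x)"
  define p1 where "p1 = dP1 p"
  define p2 where "p2 = dP2 p"
  define p11 where "p11 = dP1 p1"
  define p12 where "p12 = dP2 p1"
  define p21 where "p21 = dP1 p2"
  define p22 where "p22 = dP2 p2"
  define q where "q = (\<lambda>(t, x). Q t x)"
  define q1 where "q1 = dQ1 q"
  define q2 where "q2 = dQ2 q"
  define q11 where "q11 = dQ1 q1"
  define q12 where "q12 = dQ2 q1"
  define q21 where "q21 = dQ1 q2"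
  define q22 where "q22 = dQ2 q2"
  have pP: "p (t, x) = P t x" for t x by (simp add: p_def)
  have qQ: "q (t, x) = Q t x" for t x by (simp add: q_def)
  have pD: "p \<in> DP" "p1 \<in> DP" "p2 \<in> DP" "p12 \<in> DP" "p21 \<in> DP"
    using PD(1-3) by (simp_all add: p_def p1_def p2_def p12_def p21_def)
  have qD: "q \<in> DQ" "q1 \<in> DQ" "q2 \<in> DQ" "q12 \<in> DQ" "q21 \<in> DQ"
    using QD(1-3) by (simp_all add: q_def q1_def q2_def q12_def q21_def)
  have dp: "\<And>z. z \<in> {t0..} \<times> UNIV \<Longrightarrow> (p has_derivative (\<lambda>(h, k). p1 z * h + p2 z * k)) (at z within {t0..} \<times> UNIV)"
    using PD(4)[OF pD(1)] by (simp add: p1_def p2_def)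
  have dp1: "\<And>z. z \<in> {t0..} \<times> UNIV \<Longrightarrow> (p1 has_derivative (\<lambda>(h, k). p11 z * h + p12 z * k)) (at z within {t0..} \<times> UNIV)"
    using PD(4)[OF pD(2)] by (simp add: p11_def p12_def)
  have dp2: "\<And>z. z \<in> {t0..} \<times> UNIV \<Longrightarrow> (p2 has_derivative (\<lambda>(h, k). p21 z * h + p22 z * k)) (at z within {t0..} \<times> UNIV)"
    using PD(4)[OF pD(3)] by (simp add: p21_def p22_def)
  have dq: "\<And>z. z \<in> {t0..} \<times> UNIV \<Longrightarrow> (q has_derivative (\<lambda>(h, k). q1 z * h + q2 z * k)) (at z within {t0..} \<times> UNIV)"
    using QD(4)[OF qD(1)] by (simp add: q1_def q2_def)
  have dq1: "\<And>z. z \<in> {t0..} \<times> UNIV \<Longrightarrow> (q1 has_derivative (\<lambda>(h, k). q11 z * h + q12 z * k)) (at z within {t0..} \<times> UNIV)"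
    using QD(4)[OF qD(2)] by (simp add: q11_def q12_def)
  have dq2: "\<And>z. z \<in> {t0..} \<times> UNIV \<Longrightarrow> (q2 has_derivative (\<lambda>(h, k). q21 z * h + q22 z * k)) (at z within {t0..} \<times> UNIV)"
    using QD(4)[OF qD(3)] by (simp add: q21_def q22_def)
  have cpd: "continuous_on ({t0..} \<times> UNIV) g" if "g \<in> DP" for g
    by (rule contD[OF PD(4)[OF that]])
  have cqd: "continuous_on ({t0..} \<times> UNIV) g" if "g \<in> DQ" for g
    by (rule contD[OF QD(4)[OF that]])
  have symP: "p12 z = p21 z" if z: "z \<in> {t0<..} \<times> UNIV" for z
  proof -
    obtain t x where tx: "z = (t, x)" by (cases z)
    have U: "open ({t0<..} \<times> (UNIV :: real set))" by (auto intro!: open_Times open_greaterThan)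
    have at: "\<And>w. w \<in> {t0<..} \<times> UNIV \<Longrightarrow> w \<in> {t0..} \<times> UNIV" by auto
    have "p12 (t, x) = p21 (t, x)"
    proof (rule clairaut[OF U, of t x p p1 p12 p2 p21])
      show "(t, x) \<in> {t0<..} \<times> UNIV" using z tx by simp
      show "((\<lambda>u. p (u, y)) has_real_derivative p1 (s, y)) (at s)" if "(s, y) \<in> {t0<..} \<times> UNIV" for s y
        using lines_at(1)[of p "p1 (s, y)" "p2 (s, y)" s y] dp[OF at[OF that]] int_at[OF that] by simp
      show "((\<lambda>v. p1 (s, v)) has_real_derivative p12 (s, y)) (at y)" if "(s, y) \<in> {t0<..} \<times> UNIV" for s y
        using lines_at(2)[of p1 "p11 (s, y)" "p12 (s, y)" s y] dp1[OF at[OF that]] int_at[OF that] by simp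
      show "((\<lambda>v. p (s, v)) has_real_derivative p2 (s, y)) (at y)" if "(s, y) \<in> {t0<..} \<times> UNIV" for s y
        using lines_at(2)[of p "p1 (s, y)" "p2 (s, y)" s y] dp[OF at[OF that]] int_at[OF that] by simp
      show "((\<lambda>u. p2 (u, y)) has_real_derivative p21 (s, y)) (at s)" if "(s, y) \<in> {t0<..} \<times> UNIV" for s y
        using lines_at(1)[of p2 "p21 (s, y)" "p22 (s, y)" s y] dp2[OF at[OF that]] int_at[OF that] by simp
      have "(t, x) \<in> interior ({t0..} \<times> (UNIV :: real set))"
        using z tx by (intro interiorI[of "{t0<..} \<times> UNIV"]) (auto intro!: open_Times open_greaterThan)
      then show "continuous (at (t, x)) p12" "continuous (at (t, x)) p21"
        using continuous_on_interior[OF cpd[OF pD(4)]] continuous_on_interior[OF cpd[OF pD(5)]] by auto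
    qed
    then show ?thesis using tx by simp
  qed
  have symQ: "q12 z = q21 z" if z: "z \<in> {t0<..} \<times> UNIV" for z
  proof -
    obtain t x where tx: "z = (t, x)" by (cases z)
    have U: "open ({t0<..} \<times> (UNIV :: real set))" by (auto intro!: open_Times open_greaterThan)
    have at: "\<And>w. w \<in> {t0<..} \<times> UNIV \<Longrightarrow> w \<in> {t0..} \<times> UNIV" by auto
    have "q12 (t, x) = q21 (t, x)"
    proof (rule clairaut[OF U, of t x q q1 q12 q2 q21])
      show "(t, x) \<in> {t0<..} \<times> UNIV" using z tx by simp
      show "((\<lambda>u. q (u, y)) has_real_derivative q1 (s, y)) (at s)" if "(s, y) \<in> {t0<..} \<times> UNIV" for s y
        using lines_at(1)[of q "q1 (s, y)" "q2 (s, y)" s y] dq[OF at[OF that]] int_at[OF that] by simp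
      show "((\<lambda>v. q1 (s, v)) has_real_derivative q12 (s, y)) (at y)" if "(s, y) \<in> {t0<..} \<times> UNIV" for s y
        using lines_at(2)[of q1 "q11 (s, y)" "q12 (s, y)" s y] dq1[OF at[OF that]] int_at[OF that] by simp
      show "((\<lambda>v. q (s, v)) has_real_derivative q2 (s, y)) (at y)" if "(s, y) \<in> {t0<..} \<times> UNIV" for s y
        using lines_at(2)[of q "q1 (s, y)" "q2 (s, y)" s y] dq[OF at[OF that]] int_at[OF that] by simp
      show "((\<lambda>u. q2 (u, y)) has_real_derivative q21 (s, y)) (at s)" if "(s, y) \<in> {t0<..} \<times> UNIV" for s y
        using lines_at(1)[of q2 "q21 (s, y)" "q22 (s, y)" s y] dq2[OF at[OF that]] int_at[OF that] by simp
      have "(t, x) \<in> interior ({t0..} \<times> (UNIV :: real set))"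
        using z tx by (intro interiorI[of "{t0<..} \<times> UNIV"]) (auto intro!: open_Times open_greaterThan)
      then show "continuous (at (t, x)) q12" "continuous (at (t, x)) q21"
        using continuous_on_interior[OF cqd[OF qD(4)]] continuous_on_interior[OF cqd[OF qD(5)]] by auto
    qed
    then show ?thesis using tx by simp
  qed
  have dpA: "\<forall>z\<in>{t0..} \<times> UNIV. (p has_derivative (\<lambda>(h, k). p1 z * h + p2 z * k)) (at z within {t0..} \<times> UNIV)"
    by (intro ballI dp)
  have dp1A: "\<forall>z\<in>{t0..} \<times> UNIV. (p1 has_derivative (\<lambda>(h, k). p11 z * h + p12 z * k)) (at z within {t0..} \<times> UNIV)"
    by (intro ballI dp1)
  have dp2A: "\<forall>z\<in>{t0..} \<times> UNIV. (p2 has_derivative (\<lambda>(h, k). p21 z * h + p22 z * k)) (at z within {t0..} \<times> UNIV)"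
    by (intro ballI dp2)
  have dqA: "\<forall>z\<in>{t0..} \<times> UNIV. (q has_derivative (\<lambda>(h, k). q1 z * h + q2 z * k)) (at z within {t0..} \<times> UNIV)"
    by (intro ballI dq)
  have dq1A: "\<forall>z\<in>{t0..} \<times> UNIV. (q1 has_derivative (\<lambda>(h, k). q11 z * h + q12 z * k)) (at z within {t0..} \<times> UNIV)"
    by (intro ballI dq1)
  have dq2A: "\<forall>z\<in>{t0..} \<times> UNIV. (q2 has_derivative (\<lambda>(h, k). q21 z * h + q22 z * k)) (at z within {t0..} \<times> UNIV)"
    by (intro ballI dq2)
  note cP = conv[OF dpA dp1A dp2A pP]
  note cQ = conv[OF dqA dq1A dq2A qQ]
  have W: "wm t0 \<gamma> \<alpha> p q p1 p2 p11 p12 p22 q1 q2 q11 q12 q22"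
  proof
    show "2 \<le> t0" by (rule t0)
    show "0 < \<gamma>" by (rule gamma)
    show "0 < \<alpha>" "\<alpha> < \<gamma>" by (rule alpha(1), rule alpha(2))
    show "(p has_derivative (\<lambda>(h, k). p1 z * h + p2 z * k)) (at z within {t0..} \<times> UNIV)"
      if "z \<in> {t0..} \<times> UNIV" for z using dp[OF that] .
    show "(q has_derivative (\<lambda>(h, k). q1 z * h + q2 z * k)) (at z within {t0..} \<times> UNIV)"
      if "z \<in> {t0..} \<times> UNIV" for z using dq[OF that] .
    show "(p1 has_derivative (\<lambda>(h, k). p11 z * h + p12 z * k)) (at z)" if "z \<in> {t0<..} \<times> UNIV" for z
      using dp1[of z] int_at[OF that] that by auto
    show "(p2 has_derivative (\<lambda>(h, k). p12 z * h + p22 z * k)) (at z)" if "z \<in> {t0<..} \<times> UNIV" for z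
      using dp2[of z] int_at[OF that] that symP[OF that] by auto
    show "(q1 has_derivative (\<lambda>(h, k). q11 z * h + q12 z * k)) (at z)" if "z \<in> {t0<..} \<times> UNIV" for z
      using dq1[of z] int_at[OF that] that by auto
    show "(q2 has_derivative (\<lambda>(h, k). q12 z * h + q22 z * k)) (at z)" if "z \<in> {t0<..} \<times> UNIV" for z
      using dq2[of z] int_at[OF that] that symQ[OF that] by auto
    show "continuous_on ({t0..} \<times> UNIV) p1" by (rule cpd[OF pD(2)])
    show "continuous_on ({t0..} \<times> UNIV) p2" by (rule cpd[OF pD(3)])
    show "continuous_on ({t0..} \<times> UNIV) q1" by (rule cqd[OF qD(2)])
    show "continuous_on ({t0..} \<times> UNIV) q2" by (rule cqd[OF qD(3)])
    show "p11 z - exp (-2 * fst z) * p22 z - exp (2 * p z) * ((q1 z)\<^sup>2 - exp (-2 * fst z) * (q2 z)\<^sup>2) = 0"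
      if "z \<in> {t0<..} \<times> UNIV" for z
    proof -
      obtain t x where tx: "z = (t, x)" by (cases z)
      have t: "t0 \<le> t" using that tx by auto
      show ?thesis using eqP[OF t, of x] unfolding tx
        by (simp add: cP[OF t] cQ[OF t] pP)
    qed
    show "q11 z - exp (-2 * fst z) * q22 z + 2 * (p1 z * q1 z - exp (-2 * fst z) * p2 z * q2 z) = 0"
      if "z \<in> {t0<..} \<times> UNIV" for z
    proof -
      obtain t x where tx: "z = (t, x)" by (cases z)
      have t: "t0 \<le> t" using that tx by auto
      show ?thesis using eqQ[OF t, of x] unfolding tx
        by (simp add: cP[OF t] cQ[OF t] pP)
    qed
    show "p (t, x + 2 * pi) = p (t, x) \<and> p1 (t, x + 2 * pi) = p1 (t, x)
        \<and> p2 (t, x + 2 * pi) = p2 (t, x) \<and> q1 (t, x + 2 * pi) = q1 (t, x) \<and> q2 (t, x + 2 * pi) = q2 (t, x)"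
      if "t \<ge> t0" for t x
      using perP[OF that, of x] conv_per[OF dpA pP perP that, of x] conv_per[OF dqA qQ perQ that, of x]
      by (simp add: pP)
    show "1 \<le> p (t0, x) \<and> p (t0, x) \<le> t0 - 1" for x using init1[of x] by (simp add: pP)
    show "\<gamma> \<le> p (t0, x) / t0 \<and> p (t0, x) / t0 \<le> 1 - \<gamma>" for x using init2[of x] by (simp add: pP)
    have t00: "t0 \<le> t0" by simp
    show "1/2 * (SUP x. (p1 (t0, x) - p (t0, x) / t0 + exp (- t0) * p2 (t0, x))\<^sup>2
                  + exp (2 * p (t0, x)) * (q1 (t0, x) + exp (- t0) * q2 (t0, x))\<^sup>2)
           + 1/2 * (SUP x. (p1 (t0, x) - p (t0, x) / t0 - exp (- t0) * p2 (t0, x))\<^sup>2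
                  + exp (2 * p (t0, x)) * (q1 (t0, x) - exp (- t0) * q2 (t0, x))\<^sup>2) \<le> (\<gamma> - \<alpha>)\<^sup>2"
      using Fbound unfolding Ffun_def by (simp only: cP(1,2)[OF t00] cQ(1,2)[OF t00] pP)
  qed
  obtain CC where CC: "\<forall>t\<ge>t0. (SUP x. \<bar>exp (2 * p (t, x)) * ((q1 (t, x))\<^sup>2 + exp (-2 * t) * (q2 (t, x))\<^sup>2)\<bar>)
      \<le> CC * exp (- \<alpha> * t)"
    using wm.final[OF W] by blast
  have "(SUP x\<in>UNIV. \<bar>exp (2 * P t x) * ((dtau t0 Q t x)\<^sup>2 + exp (-2 * t) * (dth Q t x)\<^sup>2)\<bar>)
             \<le> CC * exp (-\<alpha> * t)" if t: "t \<ge> t0" for t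
    using CC t by (simp add: cQ(1,2)[OF t] pP)
  then show ?thesis by blast
qed

end
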